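(* The operators $E(p;z)$ and $F(p;z)$ satisfy \[ E(p;z)E(p;w)=g_p(z/w)\,E(p;w)E(p;z),\qquad F(p;z)F(p;w)=g_p(z/w)^{-1}F(p;w)F(p;z). \] Consequently, for every $N\ge1$, the operator-valued functions \[ \prod_{1\le i<j\le N}\omega_p(x_i,x_j)^{-1}E(p;x_1)\cdots E(p;x_N)\quad\text{and}\quad\prod_{1\le i<j\le N}\omega'_p(x_i,x_j)^{-1}F(p;x_1)\cdots F(p;x_N) \] are symmetric in $x_1,\dots,x_N$.
   Context: Fix generic complex numbers $q,t,p$ with $|q|<1$ and $|p|<1$, and set $\gamma:=(qt^{-1})^{-1/2}$. Products and theta function: $(x;p)_\infty:=\prod_{n\ge0}(1-xp^n)$ and $\Theta_p(x):=(p;p)_\infty(x;p)_\infty(px^{-1};p)_\infty$. Structure and kernel functions: - $g_p(x):=\frac{\Theta_p(qx)\Theta_p(t^{-1}x)\Theta_p(q^{-1}tx)}{\Theta_p(q^{-1}x)\Theta_p(tx)\Theta_p(qt^{-1}x)}$; - $\omega_p(x,y):=\frac{\Theta_p(q^{-1}y/x)\Theta_p(ty/x)\Theta_p(qt^{-1}y/x)}{\Theta_p(y/x)^3}$; - $\omega'_p(x,y):=\frac{\Theta_p(qy/x)\Theta_p(t^{-1}y/x)\Theta_p(q^{-1}ty/x)}{\Theta_p(y/x)^3}$. Interpretation: relations between vertex operators $X(z)Y(w)=h(z/w)Y(w)X(z)$ mean the following. For each of the normally ordered components, both orderings equal scalar functions (expanded in $w/z$, resp. $z/w$) times the same normally ordered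 product, and the ratio of these functions, as meromorphic functions, is $h(z/w)$. Boson algebra: $\mathcal{B}_{a,b}$ is generated by $a_n,b_n$ ($n\ne0$) with relations - $[a_m,a_n]=m(1-p^{|m|})\frac{1-q^{|m|}}{1-t^{|m|}}\delta_{m+n,0}$, - $[b_m,b_n]=m\frac{1-p^{|m|}}{(qt^{-1}p)^{|m|}}\frac{1-q^{|m|}}{1-t^{|m|}}\delta_{m+n,0}$, - $[a_m,b_n]=0$. Zero modes: $a_0,Q$ satisfy $[a_0,Q]=1$ and commute with all $a_n,b_n$ ($n\ne0$). Normal ordering $:\ :$ puts positive-index modes to the right. Vertex operators: - $\eta(p;z):=\,:\exp(-\sum_{n\ne0}\frac{1-t^{-n}}{1-p^{|n|}}p^{|n|}b_n\frac{z^n}{n})\exp(-\sum_{n\ne0}\frac{1-t^{n}}{1-p^{|n|}}a_n\frac{z^{-n}}{n}):$, - $\xi(p;z):=\,:\exp(\sum_{n\ne0}\frac{1-t^{-n}}{1-p^{|n|}}\gamma^{-|n|}p^{|n|}b_n\frac{z^n}{n})\exp(\sum_{n\ne0}\frac{1-t^{n}}{1-p^{|n|}}\gamma^{|n|}a_n\frac{z^{-n}}{n}):$. The operators $(\eta)_\pm,(\xi)_\pm$ are the same exponentials (unordered), with the sums restricted to $\pm n>0$. Further: - $E(p;z):=\eta(p;z)-(\eta(p;z))_-(\eta(p;p^{-1}z))_+t^{-a_0}$; - $F(p;z):=\xi(p;z)-(\xi(p;z))_-(\xi(p;p^{-1}z))_+t^{a_0}$. *)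

theory Defs
  imports "HOL-Analysis.Analysis" "HOL-Library.Multiset"
begin

definition qpoch :: "complex \<Rightarrow> complex \<Rightarrow> complex" where
  "qpoch x p = (\<Prod>n. 1 - x * p ^ n)"

definition theta :: "complex \<Rightarrow> complex \<Rightarrow> complex" where
  "theta p x = qpoch p p * qpoch x p * qpoch (p / x) p"

definition gfun :: "complex \<Rightarrow> complex \<Rightarrow> complex \<Rightarrow> complex \<Rightarrow> complex" where
  "gfun p q t x =
     theta p (q * x) * theta p (x / t) * theta p (t * x / q) /
     (theta p (x / q) * theta p (t * x) * theta p (q * x / t))"

definition omega :: "complex \<Rightarrow> complex \<Rightarrow> complex \<Rightarrow> complex \<Rightarrow> complex \<Rightarrow> complex" where
  "omega p q t x y =
     theta p (y / (q * x)) * theta p (t * y / x) * theta p (q * y / (t * x)) / theta p (y / x) ^ 3"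

definition omega' :: "complex \<Rightarrow> complex \<Rightarrow> complex \<Rightarrow> complex \<Rightarrow> complex \<Rightarrow> complex" where
  "omega' p q t x y =
     theta p (q * y / x) * theta p (y / (t * x)) * theta p (t * y / (q * x)) / theta p (y / x) ^ 3"

definition gam :: "complex \<Rightarrow> complex \<Rightarrow> complex" where
  "gam q t = inverse (csqrt (q / t))"

section \<open>Boson commutators [a_k,a_{-k}], [b_k,b_{-k}] for k > 0\<close>

definition ka :: "complex \<Rightarrow> complex \<Rightarrow> complex \<Rightarrow> nat \<Rightarrow> complex" where
  "ka p q t k = of_nat k * (1 - p ^ k) * (1 - q ^ k) / (1 - t ^ k)"

definition kb :: "complex \<Rightarrow> complex \<Rightarrow> complex \<Rightarrow> nat \<Rightarrow> complex" where
  "kb p q t k = of_nat k * (1 - p ^ k) / (q / t * p) ^ k * (1 - q ^ k) / (1 - t ^ k)"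

text \<open>A normally ordered exponential :exp(sum_n alpha(n) a_n z^(-n) + sum_n beta(n) b_n z^n): is
  encoded by the pair (alpha, beta). The boolean selects the component of E (resp. F):
  False = eta(p;z) (resp. xi(p;z)); True = (eta(p;z))_- (eta(p;p^(-1)z))_+ t^(-a0)
  (resp. with xi and t^(a0)). Zero modes t^(+-a0) commute with all a_n, b_n (n /= 0)
  and do not contribute to contractions.\<close>

type_synonym mode_data = "(int \<Rightarrow> complex) \<times> (int \<Rightarrow> complex)"

definition etaA :: "complex \<Rightarrow> complex \<Rightarrow> bool \<Rightarrow> int \<Rightarrow> complex" where
  "etaA p t e n = (if e \<and> n > 0 then p powi n else 1) *
     (- (1 - t powi n) / ((1 - p ^ nat \<bar>n\<bar>) * of_int n))"

definition etaB :: "complex \<Rightarrow> complex \<Rightarrow> bool \<Rightarrow> int \<Rightarrow> complex" where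
  "etaB p t e n = (if e \<and> n > 0 then p powi (- n) else 1) *
     (- (1 - t powi (- n)) * p ^ nat \<bar>n\<bar> / ((1 - p ^ nat \<bar>n\<bar>) * of_int n))"

definition xiA :: "complex \<Rightarrow> complex \<Rightarrow> complex \<Rightarrow> bool \<Rightarrow> int \<Rightarrow> complex" where
  "xiA p q t e n = (if e \<and> n > 0 then p powi n else 1) *
     ((1 - t powi n) * gam q t ^ nat \<bar>n\<bar> / ((1 - p ^ nat \<bar>n\<bar>) * of_int n))"

definition xiB :: "complex \<Rightarrow> complex \<Rightarrow> complex \<Rightarrow> bool \<Rightarrow> int \<Rightarrow> complex" where
  "xiB p q t e n = (if e \<and> n > 0 then p powi (- n) else 1) *
     ((1 - t powi (- n)) * gam q t powi (- \<bar>n\<bar>) * p ^ nat \<bar>n\<bar> / ((1 - p ^ nat \<bar>n\<bar>) * of_int n))"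

definition Edata :: "complex \<Rightarrow> complex \<Rightarrow> bool \<Rightarrow> mode_data" where
  "Edata p t e = (etaA p t e, etaB p t e)"

definition Fdata :: "complex \<Rightarrow> complex \<Rightarrow> complex \<Rightarrow> bool \<Rightarrow> mode_data" where
  "Fdata p q t e = (xiA p q t e, xiB p q t e)"

section \<open>Contractions  :V(z): :W(w): = C(w/z) :V(z)W(w):\<close>

definition contrA :: "complex \<Rightarrow> complex \<Rightarrow> complex \<Rightarrow> mode_data \<Rightarrow> mode_data \<Rightarrow> complex \<Rightarrow> nat \<Rightarrow> complex" where
  "contrA p q t V W y n = fst V (int (Suc n)) * fst W (- int (Suc n)) * ka p q t (Suc n) * y ^ Suc n"

definition contrB :: "complex \<Rightarrow> complex \<Rightarrow> complex \<Rightarrow> mode_data \<Rightarrow> mode_data \<Rightarrow> complex \<Rightarrow> nat \<Rightarrow> complex" where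
  "contrB p q t V W y n = snd V (int (Suc n)) * snd W (- int (Suc n)) * kb p q t (Suc n) * inverse y ^ Suc n"

definition discrete_Cstar :: "complex set \<Rightarrow> bool" where
  "discrete_Cstar S \<longleftrightarrow> 0 \<notin> S \<and> (\<forall>x. x \<noteq> 0 \<longrightarrow> \<not> x islimpt S)"

definition meromorphic_Cstar :: "(complex \<Rightarrow> complex) \<Rightarrow> complex set \<Rightarrow> bool" where
  "meromorphic_Cstar f S \<longleftrightarrow> discrete_Cstar S \<and> f holomorphic_on (UNIV - insert 0 S) \<and>
     (\<forall>s\<in>S. \<exists>n::nat. \<exists>L. ((\<lambda>y. (y - s) ^ n * f y) \<longlongrightarrow> L) (at s))"

text \<open>f is the meromorphic function (on C^*) represented by the contraction of V(z)W(w),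
  expanded in y = w/z: each exponential factor converges (near 0, resp. near infinity)
  and continues meromorphically to C^*.\<close>

definition contraction_fun :: "complex \<Rightarrow> complex \<Rightarrow> complex \<Rightarrow> mode_data \<Rightarrow> mode_data \<Rightarrow> (complex \<Rightarrow> complex) \<Rightarrow> bool" where
  "contraction_fun p q t V W f \<longleftrightarrow>
     (\<exists>fA fB SA SB. meromorphic_Cstar fA SA \<and> meromorphic_Cstar fB SB \<and>
        (\<exists>r>0. \<forall>y. 0 < norm y \<and> norm y < r \<longrightarrow>
            summable (contrA p q t V W y) \<and> fA y = exp (suminf (contrA p q t V W y))) \<and>
        (\<exists>R. \<forall>y. R < norm y \<longrightarrow>
            summable (contrB p q t V W y) \<and> fB y = exp (suminf (contrB p q t V W y))) \<and>
        (\<forall>y. y \<noteq> 0 \<longrightarrow> f y = fA y * fB y))"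

text \<open>The operator-valued function  prod_{i<j} w(x_i,x_j)^(-1) X(x_1)...X(x_N)  with X = X_0 - X_1,
  written as a linear combination of normally ordered monomials :X_{e_1}(x_1)...X_{e_N}(x_N):
  (commutative), each monomial identified by the multiset of pairs (e_i, x_i); the value at M
  is the (meromorphically continued) scalar coefficient of that monomial.\<close>

definition opprod :: "(bool \<Rightarrow> bool \<Rightarrow> complex \<Rightarrow> complex) \<Rightarrow> (complex \<Rightarrow> complex \<Rightarrow> complex)
                      \<Rightarrow> complex list \<Rightarrow> (bool \<times> complex) multiset \<Rightarrow> complex" where
  "opprod f w xs M =
     (\<Sum>es\<in>{es. length es = length xs \<and> mset (zip es xs) = M}.
        (- 1) ^ length (filter id es) *
        (\<Prod>i<length xs. \<Prod>j\<in>{i<..<length xs}.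
            inverse (w (xs ! i) (xs ! j)) * f (es ! i) (es ! j) (xs ! j / xs ! i)))"

end

theory Submission
  imports Defs "HOL-Complex_Analysis.Complex_Analysis" "HOL-Combinatorics.Permutations"
begin

lemma qp_summ:
  fixes p x :: complex assumes "norm p < 1"
  shows "summable (\<lambda>n. norm ((1 - x * p ^ n) - 1))"
proof -
  have "summable (\<lambda>n. norm x * norm p ^ n)"
    using assms by (intro summable_mult summable_geometric) auto
  then show ?thesis by (simp add: norm_mult norm_power)
qed

lemma qp_conv:
  fixes p x :: complex assumes "norm p < 1"
  shows "convergent_prod (\<lambda>n. 1 - x * p ^ n)"
  by (rule abs_convergent_prod_imp_convergent_prod[OF summable_imp_abs_convergent_prod[OF qp_summ[OF assms]]])

lemma qp_has:
  fixes p x :: complex assumes "norm p < 1"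
  shows "(\<lambda>n. 1 - x * p ^ n) has_prod qpoch x p"
  unfolding qpoch_def using qp_conv[OF assms] convergent_prod_has_prod by blast

lemma qp_zero:
  fixes p x :: complex assumes "norm p < 1"
  shows "qpoch x p = 0 \<longleftrightarrow> (\<exists>n. x * p ^ n = 1)"
proof -
  have "qpoch x p = 0 \<longleftrightarrow> (\<exists>n. 0 = 1 - x * p ^ n)"
    using has_prod_eq_0_iff[OF qp_has[OF assms, of x]] by (simp add: image_iff)
  also have "\<dots> \<longleftrightarrow> (\<exists>n. x * p ^ n = 1)"
    by (metis eq_iff_diff_eq_0)
  finally show ?thesis .
qed

lemma qp_0: "qpoch 0 p = 1"
  by (simp add: qpoch_def)

lemma qp_rec:
  fixes p x :: complex assumes "norm p < 1"
  shows "qpoch x p = (1 - x) * qpoch (p * x) p"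
proof (cases "x = 1")
  case True
  have "x * p ^ 0 = 1" using True by simp
  then have "qpoch x p = 0" using qp_zero[OF assms, of x] by blast
  then show ?thesis using True by simp
next
  case False
  have e1: "(\<Prod>n. (\<lambda>n. 1 - x * p ^ n) (Suc n)) = qpoch x p / (1 - x)"
    using prodinf_split_head[OF qp_conv[OF assms, of x]] False unfolding qpoch_def by simp
  have "\<And>n. (\<lambda>n. 1 - x * p ^ n) (Suc n) = 1 - (p * x) * p ^ n"
    by (simp only: power_Suc mult.assoc mult.left_commute)
  then have e2: "(\<Prod>n. (\<lambda>n. 1 - x * p ^ n) (Suc n)) = qpoch (p * x) p"
    unfolding qpoch_def by (rule prodinf_cong)
  from e1 e2 have "qpoch (p * x) p = qpoch x p / (1 - x)" by simp
  then show ?thesis using False by simp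
qed

lemma qp_holo:
  fixes p :: complex assumes "norm p < 1"
  shows "(\<lambda>x. qpoch x p) holomorphic_on UNIV"
proof (rule holomorphic_uniform_sequence[where f = "\<lambda>n x. \<Prod>k<n. 1 - x * p ^ k"])
  show "open (UNIV :: complex set)" by simp
next
  fix n show "(\<lambda>x. \<Prod>k<n. 1 - x * p ^ k) holomorphic_on UNIV"
    by (intro holomorphic_intros)
next
  fix z :: complex assume "z \<in> UNIV"
  have "uniformly_convergent_on (cball z 1) (\<lambda>N x. \<Prod>n<N. 1 - x * p ^ n)"
  proof (rule uniformly_convergent_on_prod')
    show "continuous_on (cball z 1) (\<lambda>x. 1 - x * p ^ n)" for n
      by (intro continuous_intros)
    show "compact (cball z 1)" by simp
    show "uniformly_convergent_on (cball z 1) (\<lambda>N x. \<Sum>n<N. norm (1 - x * p ^ n - 1))"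
    proof (rule Weierstrass_m_test'[where M = "\<lambda>n. (norm z + 1) * norm p ^ n"])
      fix n x assume "x \<in> cball z (1::real)"
      then have "norm x \<le> norm z + 1"
        by (metis dist_norm mem_cball norm_triangle_sub add.commute add_le_cancel_left order_trans norm_minus_commute)
      then show "norm (norm (1 - x * p ^ n - 1)) \<le> (norm z + 1) * norm p ^ n"
        by (simp add: norm_mult norm_power mult_right_mono)
    next
      show "summable (\<lambda>n. (norm z + 1) * norm p ^ n)"
        using assms by (intro summable_mult summable_geometric) auto
    qed
  qed
  then have ul: "uniform_limit (cball z 1) (\<lambda>N x. \<Prod>n<N. 1 - x * p ^ n) (\<lambda>x. lim (\<lambda>N. \<Prod>n<N. 1 - x * p ^ n)) sequentially"
    using uniformly_convergent_uniform_limit_iff by blast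
  have "lim (\<lambda>N. \<Prod>n<N. 1 - x * p ^ n) = qpoch x p" for x
    using has_prod_imp_tendsto'[OF qp_has[OF assms, of x]] limI by blast
  with ul have "uniform_limit (cball z 1) (\<lambda>N x. \<Prod>n<N. 1 - x * p ^ n) (\<lambda>x. qpoch x p) sequentially"
    by simp
  then show "\<exists>d>0. cball z d \<subseteq> UNIV \<and> uniform_limit (cball z d) (\<lambda>n x. \<Prod>k<n. 1 - x * p ^ k) (\<lambda>x. qpoch x p) sequentially"
    using zero_less_one subset_UNIV by blast
qed

definition Phi :: "complex \<Rightarrow> complex \<Rightarrow> complex \<Rightarrow> complex \<Rightarrow> complex" where
  "Phi p a b x = qpoch x p * qpoch (a * b * x) p / (qpoch (a * x) p * qpoch (b * x) p)"

definition cc :: "complex \<Rightarrow> complex \<Rightarrow> complex \<Rightarrow> nat \<Rightarrow> complex" where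
  "cc p a b k = - (1 - a ^ k) * (1 - b ^ k) / (of_nat k * (1 - p ^ k))"

lemma qp_nz_small:
  fixes p w :: complex assumes "norm p < 1" "norm w < 1"
  shows "qpoch w p \<noteq> 0"
proof
  assume "qpoch w p = 0"
  then obtain n where n: "w * p ^ n = 1" using qp_zero[OF assms(1)] by blast
  have "norm (w * p ^ n) < 1"
  proof -
    have "norm (p ^ n) \<le> 1" using assms(1) by (simp add: norm_power power_le_one)
    then have "norm w * norm (p ^ n) \<le> norm w" using mult_left_le[of "norm (p^n)" "norm w"] by simp
    then show ?thesis using assms(2) by (simp add: norm_mult)
  qed
  with n show False by simp
qed

lemma pow_ne1:
  fixes p :: complex assumes "norm p < 1" "n \<noteq> 0"
  shows "p ^ n \<noteq> 1"
proof
  assume "p ^ n = 1"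
  then have "norm p ^ n = 1" by (metis norm_one norm_power)
  moreover have "norm p ^ n < 1" using assms by (simp add: power_less_one_iff)
  ultimately show False by simp
qed

lemma norm_1_minus_pow_le:
  fixes a :: complex
  shows "norm (1 - a ^ k) \<le> 2 * (1 + norm a) ^ k"
proof -
  have 1: "norm (1 - a ^ k) \<le> 1 + norm a ^ k"
    using norm_triangle_ineq4[of 1 "a^k"] by (simp add: norm_power)
  have 2: "norm a ^ k \<le> (1 + norm a) ^ k" by (intro power_mono) auto
  have 3: "1 \<le> (1 + norm a) ^ k" by (intro one_le_power) auto
  from 1 2 3 show ?thesis by linarith
qed

lemma real_alg1: fixes A B X d :: real
  shows "(2 * A) * (2 * B) * X / d = 4 / d * (A * B * X)"
  by (simp add: divide_inverse mult_ac)

lemma cc_bound: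
  fixes p a b x :: complex assumes p: "norm p < 1"
  shows "norm (cc p a b k * x ^ k) \<le> 4 / (1 - norm p) * ((1 + norm a) * (1 + norm b) * norm x) ^ k"
proof (cases "k = 0")
  case True then show ?thesis using p by (simp add: cc_def)
next
  case False
  have "norm p ^ k \<le> norm p ^ 1"
    by (rule power_decreasing) (use False p in auto)
  then have pk: "norm (p ^ k) \<le> norm p" by (simp add: norm_power)
  have d: "1 - norm p \<le> of_nat k * norm (1 - p ^ k)"
  proof -
    have "1 - norm p \<le> 1 - norm (p ^ k)" using pk by simp
    also have "\<dots> \<le> norm (1 - p ^ k)" using norm_triangle_ineq2[of 1 "p^k"] by simp
    also have "\<dots> \<le> of_nat k * norm (1 - p ^ k)"
      using False mult_right_mono[of 1 "of_nat k" "norm (1 - p ^ k)"] by simp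
    finally show ?thesis .
  qed
  have pos: "0 < 1 - norm p" using p by simp
  have "norm (cc p a b k * x ^ k) = norm (1 - a ^ k) * norm (1 - b ^ k) * norm x ^ k / (of_nat k * norm (1 - p ^ k))"
    by (simp add: cc_def norm_mult norm_divide norm_power norm_minus_commute)
  also have "\<dots> \<le> (2 * (1 + norm a) ^ k) * (2 * (1 + norm b) ^ k) * norm x ^ k / (1 - norm p)"
  proof (rule frac_le)
    show "0 \<le> 2 * (1 + cmod a) ^ k * (2 * (1 + cmod b) ^ k) * cmod x ^ k" by simp
    show "norm (1 - a ^ k) * norm (1 - b ^ k) * norm x ^ k \<le> 2 * (1 + cmod a) ^ k * (2 * (1 + cmod b) ^ k) * cmod x ^ k"
      by (intro mult_mono norm_1_minus_pow_le) auto
  qed (use pos d in auto)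
  also have "\<dots> = 4 / (1 - norm p) * ((1 + norm a) ^ k * (1 + norm b) ^ k * norm x ^ k)"
    by (rule real_alg1)
  also have "\<dots> = 4 / (1 - norm p) * ((1 + norm a) * (1 + norm b) * norm x) ^ k"
    by (simp only: power_mult_distrib)
  finally show ?thesis .
qed

lemma cc_summable:
  fixes p a b x :: complex assumes p: "norm p < 1"
    and x: "(1 + norm a) * (1 + norm b) * norm x < 1"
  shows "summable (\<lambda>k. cc p a b k * x ^ k)"
proof (rule summable_comparison_test[OF _ summable_mult[OF summable_geometric]])
  show "\<exists>N. \<forall>n\<ge>N. norm (cc p a b n * x ^ n) \<le> 4 / (1 - norm p) * ((1 + norm a) * (1 + norm b) * norm x) ^ n"
    using cc_bound[OF p] by blast
  show "norm ((1 + norm a) * (1 + norm b) * norm x) < 1" using x by simp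
qed

lemma alg0: fixes C X P :: complex shows "C * X - C * (P * X) = C * (1 - P) * X"
  by (simp add: algebra_simps)
lemma alg: fixes k A B X P :: complex
  assumes "k \<noteq> 0" "1 - P \<noteq> 0"
  shows "- X / k - - (A * X) / k - - (B * X) / k + - (A * B * X) / k =
    (- (1 - A) * (1 - B) / (k * (1 - P))) * X - (- (1 - A) * (1 - B) / (k * (1 - P))) * (P * X)"
proof -
  have "(- (1 - A) * (1 - B) / (k * (1 - P))) * X - (- (1 - A) * (1 - B) / (k * (1 - P))) * (P * X)
     = (- (1 - A) * (1 - B) / (k * (1 - P))) * (1 - P) * X" by (rule alg0)
  also have "\<dots> = (- (1 - A) * (1 - B) / k) * X" using assms by simp
  also have "\<dots> = (- X + A * X + B * X - A * B * X) / k"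
    by (simp add: algebra_simps)
  also have "\<dots> = - X / k - - (A * X) / k - - (B * X) / k + - (A * B * X) / k"
    by (simp add: add_divide_distrib diff_divide_distrib)
  finally show ?thesis by simp
qed

lemma ln_sums:
  fixes w :: complex assumes "norm w < 1"
  shows "(\<lambda>n. - (w ^ n) / of_nat n) sums ln (1 - w)"
  using Ln_series'[of "-w"] assms by simp

lemma cc_fun_eq:
  fixes p a b x :: complex assumes p: "norm p < 1"
    and x: "(1 + norm a) * (1 + norm b) * norm x < 1"
  shows "(\<lambda>k. cc p a b k * x ^ k - cc p a b k * (p * x) ^ k) sums
           (ln (1 - x) - ln (1 - a * x) - ln (1 - b * x) + ln (1 - a * b * x))"
proof -
  have na: "norm a \<le> (1 + norm a) * (1 + norm b)" "norm b \<le> (1 + norm a) * (1 + norm b)"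
       "1 \<le> (1 + norm a) * (1 + norm b)" "norm a * norm b \<le> (1 + norm a) * (1 + norm b)"
    by (auto simp: algebra_simps intro: add_increasing mult_nonneg_nonneg)
  have lt: "norm w < 1" if "norm w \<le> (1 + norm a) * (1 + norm b) * norm x" for w :: complex
    using that x by linarith
  have n1: "norm x < 1" by (rule lt) (use mult_right_mono[OF na(3), of "norm x"] in simp)
  have n2: "norm (a * x) < 1" by (rule lt) (use mult_right_mono[OF na(1), of "norm x"] in \<open>simp add: norm_mult\<close>)
  have n3: "norm (b * x) < 1" by (rule lt) (use mult_right_mono[OF na(2), of "norm x"] in \<open>simp add: norm_mult\<close>)
  have n4: "norm (a * b * x) < 1" by (rule lt) (use mult_right_mono[OF na(4), of "norm x"] in \<open>simp add: norm_mult\<close>)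
  have s: "(\<lambda>n. ((- (x ^ n) / of_nat n - - ((a * x) ^ n) / of_nat n) - - ((b * x) ^ n) / of_nat n)
              + - ((a * b * x) ^ n) / of_nat n) sums
           (ln (1 - x) - ln (1 - a * x) - ln (1 - b * x) + ln (1 - a * b * x))"
    by (intro sums_add sums_diff ln_sums n1 n2 n3 n4)
  show ?thesis
  proof (rule sums_cong[THEN iffD1, OF _ s])
    fix n
    show "(- (x ^ n) / of_nat n - - ((a * x) ^ n) / of_nat n) - - ((b * x) ^ n) / of_nat n
              + - ((a * b * x) ^ n) / of_nat n = cc p a b n * x ^ n - cc p a b n * (p * x) ^ n"
    proof (cases "n = 0")
      case True then show ?thesis by (simp add: cc_def)
    next
      case False
      have "1 - p ^ n \<noteq> 0" using pow_ne1[OF p False] by simp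
      have "- (x ^ n) / of_nat n - - (a ^ n * x ^ n) / of_nat n - - (b ^ n * x ^ n) / of_nat n + - (a ^ n * b ^ n * x ^ n) / of_nat n
          = (- (1 - a ^ n) * (1 - b ^ n) / (of_nat n * (1 - p ^ n))) * x ^ n - (- (1 - a ^ n) * (1 - b ^ n) / (of_nat n * (1 - p ^ n))) * (p ^ n * x ^ n)"
        by (rule alg[OF _ \<open>1 - p ^ n \<noteq> 0\<close>]) (simp add: False)
      then show ?thesis unfolding cc_def power_mult_distrib .
    qed
  qed
qed

lemma Phi_rec:
  fixes p a b x :: complex assumes p: "norm p < 1"
  shows "Phi p a b x = (1 - x) * (1 - a * b * x) / ((1 - a * x) * (1 - b * x)) * Phi p a b (p * x)"
proof -
  have e1: "qpoch x p = (1 - x) * qpoch (p * x) p" by (rule qp_rec[OF p])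
  have e2: "qpoch (a * b * x) p = (1 - a * b * x) * qpoch (a * b * (p * x)) p"
    using qp_rec[OF p, of "a * b * x"] by (simp add: mult.left_commute)
  have e3: "qpoch (a * x) p = (1 - a * x) * qpoch (a * (p * x)) p"
    using qp_rec[OF p, of "a * x"] by (simp add: mult.left_commute)
  have e4: "qpoch (b * x) p = (1 - b * x) * qpoch (b * (p * x)) p"
    using qp_rec[OF p, of "b * x"] by (simp add: mult.left_commute)
  show ?thesis unfolding Phi_def e1 e2 e3 e4
    by (simp add: divide_inverse inverse_mult_distrib mult_ac)
qed

lemma norm_lt_helpers:
  fixes a b x :: complex
  assumes x: "(1 + norm a) * (1 + norm b) * norm x < 1"
  shows "norm x < 1" "norm (a * x) < 1" "norm (b * x) < 1" "norm (a * b * x) < 1"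
proof -
  have na: "norm a \<le> (1 + norm a) * (1 + norm b)" "norm b \<le> (1 + norm a) * (1 + norm b)"
       "1 \<le> (1 + norm a) * (1 + norm b)" "norm a * norm b \<le> (1 + norm a) * (1 + norm b)"
    by (auto simp: algebra_simps intro: add_increasing mult_nonneg_nonneg)
  have lt: "norm w < 1" if "norm w \<le> (1 + norm a) * (1 + norm b) * norm x" for w :: complex
    using that x by linarith
  show "norm x < 1" by (rule lt) (use mult_right_mono[OF na(3), of "norm x"] in simp)
  show "norm (a * x) < 1" by (rule lt) (use mult_right_mono[OF na(1), of "norm x"] in \<open>simp add: norm_mult\<close>)
  show "norm (b * x) < 1" by (rule lt) (use mult_right_mono[OF na(2), of "norm x"] in \<open>simp add: norm_mult\<close>)
  show "norm (a * b * x) < 1" by (rule lt) (use mult_right_mono[OF na(4), of "norm x"] in \<open>simp add: norm_mult\<close>)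
qed

lemma Phi_nz:
  fixes p a b x :: complex assumes p: "norm p < 1"
    and x: "(1 + norm a) * (1 + norm b) * norm x < 1"
  shows "Phi p a b x \<noteq> 0"
  using norm_lt_helpers[OF x] qp_nz_small[OF p] by (simp add: Phi_def)

lemma exp_S_rec:
  fixes p a b x :: complex assumes p: "norm p < 1"
    and x: "(1 + norm a) * (1 + norm b) * norm x < 1"
  shows "exp (\<Sum>k. cc p a b k * x ^ k) =
         (1 - x) * (1 - a * b * x) / ((1 - a * x) * (1 - b * x)) * exp (\<Sum>k. cc p a b k * (p * x) ^ k)"
proof -
  note n = norm_lt_helpers[OF x]
  have px: "(1 + norm a) * (1 + norm b) * norm (p * x) < 1"
  proof -
    have "norm (p * x) \<le> norm x" using p by (simp add: norm_mult mult_left_le_one_le)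
    then have "(1 + norm a) * (1 + norm b) * norm (p * x) \<le> (1 + norm a) * (1 + norm b) * norm x"
      by (intro mult_left_mono) auto
    then show ?thesis using x by linarith
  qed
  have s1: "(\<lambda>k. cc p a b k * x ^ k - cc p a b k * (p * x) ^ k) sums
      ((\<Sum>k. cc p a b k * x ^ k) - (\<Sum>k. cc p a b k * (p * x) ^ k))"
    by (intro sums_diff summable_sums cc_summable[OF p x] cc_summable[OF p px])
  have eq: "(\<Sum>k. cc p a b k * x ^ k) - (\<Sum>k. cc p a b k * (p * x) ^ k) =
      ln (1 - x) - ln (1 - a * x) - ln (1 - b * x) + ln (1 - a * b * x)"
    using sums_unique2[OF s1 cc_fun_eq[OF p x]] .
  have nz: "1 - x \<noteq> 0" "1 - a * x \<noteq> 0" "1 - b * x \<noteq> 0" "1 - a * b * x \<noteq> 0"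
    using n by (auto simp: right_minus_eq)
  have "exp (\<Sum>k. cc p a b k * x ^ k) = exp ((\<Sum>k. cc p a b k * x ^ k) - (\<Sum>k. cc p a b k * (p * x) ^ k))
        * exp (\<Sum>k. cc p a b k * (p * x) ^ k)"
    by (simp add: exp_diff)
  also have "exp ((\<Sum>k. cc p a b k * x ^ k) - (\<Sum>k. cc p a b k * (p * x) ^ k)) =
      (1 - x) / (1 - a * x) / (1 - b * x) * (1 - a * b * x)"
    unfolding eq using nz by (simp add: exp_add exp_diff)
  finally show ?thesis by (simp add: divide_inverse inverse_mult_distrib mult_ac)
qed

lemma qp_isCont:
  fixes p c :: complex assumes p: "norm p < 1"
  shows "isCont (\<lambda>x. qpoch (c * x) p) z"
proof -
  have "continuous_on UNIV (\<lambda>x. qpoch x p)"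
    using holomorphic_on_imp_continuous_on[OF qp_holo[OF p]] .
  then have "isCont (\<lambda>x. qpoch x p) w" for w
    by (simp add: continuous_on_eq_continuous_at)
  then show ?thesis
    using isCont_o2[where f="\<lambda>x. c * x" and a=z and g="\<lambda>x. qpoch x p"] by simp
qed

lemma Phi_isCont:
  fixes p a b :: complex assumes p: "norm p < 1"
  shows "isCont (Phi p a b) 0"
proof -
  have 1: "isCont (\<lambda>x. qpoch (1 * x) p) 0" "isCont (\<lambda>x. qpoch ((a * b) * x) p) 0"
    "isCont (\<lambda>x. qpoch (a * x) p) 0" "isCont (\<lambda>x. qpoch (b * x) p) 0"
    by (rule qp_isCont[OF p])+
  have "isCont (\<lambda>x. qpoch (1 * x) p * qpoch ((a * b) * x) p / (qpoch (a * x) p * qpoch (b * x) p)) 0"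
    using 1 by (intro continuous_intros) (auto simp: qp_0)
  then show ?thesis unfolding Phi_def[abs_def] by (simp add: mult.assoc)
qed

lemma GA0:
  fixes p a b x :: complex assumes p: "norm p < 1"
    and x: "(1 + norm a) * (1 + norm b) * norm x < 1"
  shows "exp (\<Sum>k. cc p a b k * x ^ k) = Phi p a b x"
proof -
  define M where "M = (1 + norm a) * (1 + norm b)"
  have M1: "1 \<le> M" unfolding M_def by (auto simp: algebra_simps intro: add_increasing mult_nonneg_nonneg)
  define S where "S y = (\<Sum>k. cc p a b k * y ^ k)" for y
  define u where "u y = exp (S y) / Phi p a b y" for y
  have small: "M * norm (p ^ n * x) < 1" for n
  proof -
    have "norm (p ^ n * x) \<le> norm x"
      using p by (simp add: norm_mult norm_power mult_left_le_one_le power_le_one)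
    then have "M * norm (p ^ n * x) \<le> M * norm x" using M1 by (intro mult_left_mono) auto
    then show ?thesis using x unfolding M_def by linarith
  qed
  have urec: "u y = u (p * y)" if y: "M * norm y < 1" for y
  proof -
    have y': "(1 + norm a) * (1 + norm b) * norm y < 1" using y unfolding M_def .
    note n = norm_lt_helpers[OF y']
    have nz: "1 - y \<noteq> 0" "1 - a * y \<noteq> 0" "1 - b * y \<noteq> 0" "1 - a * b * y \<noteq> 0"
      using n by (auto simp: right_minus_eq)
    have "u y = ((1 - y) * (1 - a * b * y) / ((1 - a * y) * (1 - b * y)) * exp (S (p * y))) /
          ((1 - y) * (1 - a * b * y) / ((1 - a * y) * (1 - b * y)) * Phi p a b (p * y))"
      unfolding u_def S_def using exp_S_rec[OF p y'] Phi_rec[OF p, of a b y] by simp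
    also have "\<dots> = u (p * y)" unfolding u_def using nz by simp
    finally show ?thesis .
  qed
  have useq: "u (p ^ n * x) = u x" for n
  proof (induction n)
    case (Suc n)
    have "u (p ^ Suc n * x) = u (p * (p ^ n * x))" by (simp add: mult.assoc)
    also have "\<dots> = u (p ^ n * x)" using urec[OF small[of n]] by simp
    finally show ?case using Suc by simp
  qed simp
  have S_cont: "isCont S 0"
  proof -
    define K where "K = complex_of_real (1 / (2 * M))"
    have "norm K = 1 / (2 * M)" unfolding K_def norm_of_real using M1 by simp
    then have "(1 + norm a) * (1 + norm b) * norm K < 1" unfolding M_def[symmetric] using M1 by simp
    then have "summable (\<lambda>k. cc p a b k * K ^ k)" by (rule cc_summable[OF p])
    moreover have "norm (0::complex) < norm K" using \<open>norm K = 1 / (2 * M)\<close> M1 by simp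
    ultimately show ?thesis unfolding S_def[abs_def] by (rule isCont_powser)
  qed
  have S0: "S 0 = 0" unfolding S_def powser_zero by (simp add: cc_def)
  have Phi0: "Phi p a b 0 = 1" by (simp add: Phi_def qp_0)
  have u_cont: "isCont u 0"
    unfolding u_def[abs_def] using S_cont Phi_isCont[OF p] Phi0
    by (intro continuous_intros isCont_o2[OF S_cont]) auto
  have "(\<lambda>n. p ^ n * x) \<longlonglongrightarrow> 0 * x"
    by (intro tendsto_mult LIMSEQ_power_zero p tendsto_const)
  then have "(\<lambda>n. u (p ^ n * x)) \<longlonglongrightarrow> u 0"
    using isCont_tendsto_compose[OF u_cont] by simp
  then have "(\<lambda>n. u x) \<longlonglongrightarrow> u 0" using useq by simp
  then have "u x = u 0" by (simp add: LIMSEQ_const_iff)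
  also have "u 0 = 1" unfolding u_def using S0 Phi0 by simp
  finally have "u x = 1" .
  moreover have "Phi p a b x \<noteq> 0" by (rule Phi_nz[OF p x])
  ultimately show ?thesis unfolding u_def S_def by simp
qed

lemma GA:
  fixes p a b x :: complex assumes p: "norm p < 1"
    and x: "(1 + norm a) * (1 + norm b) * norm x < 1"
  shows "summable (\<lambda>n. cc p a b (Suc n) * x ^ Suc n)"
    "exp (\<Sum>n. cc p a b (Suc n) * x ^ Suc n) = Phi p a b x"
proof -
  have sm: "summable (\<lambda>k. cc p a b k * x ^ k)" by (rule cc_summable[OF p x])
  then show "summable (\<lambda>n. cc p a b (Suc n) * x ^ Suc n)"
    using summable_Suc_iff[of "\<lambda>k. cc p a b k * x ^ k"] by simp
  have "(\<Sum>n. cc p a b (Suc n) * x ^ Suc n) = (\<Sum>k. cc p a b k * x ^ k)"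
    using suminf_split_head[OF sm] by (simp add: cc_def)
  then show "exp (\<Sum>n. cc p a b (Suc n) * x ^ Suc n) = Phi p a b x"
    using GA0[OF p x] by simp
qed

lemma atomEA: fixes L E Ti D Q K Y :: complex
  assumes "K \<noteq> 0" "D \<noteq> 0" "E \<noteq> 0"
  shows "L * (- E / (D * K)) * ((1 - Ti) / (D * K)) * (K * D * (1 - Q) / E) * Y
       = - (1 - Ti) * (1 - Q) / (K * D) * (L * Y)"
  using assms by (simp add: field_simps)

lemma atomEB: fixes L Ti P Q K Y D E :: complex
  assumes "K \<noteq> 0" "D \<noteq> 0" "E \<noteq> 0" "Ti \<noteq> 0" "Q \<noteq> 0" "P \<noteq> 0"
  shows "L * (- (1 - Ti) * P / (D * K)) * (E * P / (D * K)) * (K * D / (Q * Ti * P) * (1 - Q) / E) * Y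
       = - (1 - Ti) * (1 - Q) / (K * D) * (L * P / (Ti * Q) * Y)"
  using assms by (simp add: field_simps)

lemma atomFA: fixes L E Ti D Q K Y G :: complex
  assumes "K \<noteq> 0" "D \<noteq> 0" "E \<noteq> 0"
  shows "L * (E * G / (D * K)) * (- ((1 - Ti) * G / (D * K))) * (K * D * (1 - Q) / E) * Y
       = - (1 - Ti) * (1 - Q) / (K * D) * (L * (G * G) * Y)"
  using assms by (simp add: field_simps)

lemma atomFB: fixes L Ti P Q K Y Gi D E :: complex
  assumes "K \<noteq> 0" "D \<noteq> 0" "E \<noteq> 0" "Ti \<noteq> 0" "Q \<noteq> 0" "P \<noteq> 0"
  shows "L * ((1 - Ti) * Gi * P / (D * K)) * (- (E * Gi * P / (D * K))) * (K * D / (Q * Ti * P) * (1 - Q) / E) * Y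
       = - (1 - Ti) * (1 - Q) / (K * D) * (L * P * (Gi * Gi) / (Ti * Q) * Y)"
  using assms by (simp add: field_simps)

lemma negdiv: "- ((a - 1) / X) = (1 - a) / (X::complex)"
  by (metis minus_diff_eq minus_divide_left)
lemma negdiv2: "- ((a - 1) * b / X) = (1 - a) * b / (X::complex)"
  by (metis minus_diff_eq minus_divide_left mult_minus_left)

lemma etaA_pos: "k > 0 \<Longrightarrow> etaA p t e (int k) = (if e then p ^ k else 1) * (- (1 - t ^ k) / ((1 - p ^ k) * of_nat k))"
  by (simp add: etaA_def)
lemma etaA_neg: "k > 0 \<Longrightarrow> etaA p t e (- int k) = (1 - inverse t ^ k) / ((1 - p ^ k) * of_nat k)"
  by (simp add: etaA_def power_int_minus power_inverse negdiv negdiv2)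
lemma etaB_pos: "k > 0 \<Longrightarrow> etaB p t e (int k) = (if e then inverse p ^ k else 1) * (- (1 - inverse t ^ k) * p ^ k / ((1 - p ^ k) * of_nat k))"
  by (simp add: etaB_def power_int_minus power_inverse)
lemma etaB_neg: "k > 0 \<Longrightarrow> etaB p t e (- int k) = (1 - t ^ k) * p ^ k / ((1 - p ^ k) * of_nat k)"
  by (simp add: etaB_def negdiv negdiv2)
lemma xiA_pos: "k > 0 \<Longrightarrow> xiA p q t e (int k) = (if e then p ^ k else 1) * ((1 - t ^ k) * gam q t ^ k / ((1 - p ^ k) * of_nat k))"
  by (simp add: xiA_def)
lemma xiA_neg: "k > 0 \<Longrightarrow> xiA p q t e (- int k) = - ((1 - inverse t ^ k) * gam q t ^ k / ((1 - p ^ k) * of_nat k))"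
  by (simp add: xiA_def power_int_minus power_inverse)
lemma xiB_pos: "k > 0 \<Longrightarrow> xiB p q t e (int k) = (if e then inverse p ^ k else 1) * ((1 - inverse t ^ k) * inverse (gam q t) ^ k * p ^ k / ((1 - p ^ k) * of_nat k))"
  by (simp add: xiB_def power_int_minus power_inverse)
lemma xiB_neg: "k > 0 \<Longrightarrow> xiB p q t e (- int k) = - ((1 - t ^ k) * inverse (gam q t) ^ k * p ^ k / ((1 - p ^ k) * of_nat k))"
  by (simp add: xiB_def power_int_minus power_inverse)

lemma qtp_pow: "(q / t * p) ^ k = q ^ k * inverse t ^ k * (p ^ k :: complex)"
  by (simp add: power_mult_distrib divide_inverse power_inverse)

lemma contrA_E:
  fixes p q t y :: complex
  assumes p: "norm p < 1" and t: "\<forall>k::nat. k > 0 \<longrightarrow> t ^ k \<noteq> 1"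
  shows "contrA p q t (Edata p t i) (Edata p t j) y n = cc p (inverse t) q (Suc n) * ((if i then p else 1) * y) ^ Suc n"
proof -
  define k where "k = Suc n"
  have k0: "k > 0" unfolding k_def by simp
  have nz: "of_nat k \<noteq> (0::complex)" "1 - p ^ k \<noteq> 0" "1 - t ^ k \<noteq> 0"
    using k0 pow_ne1[OF p, of k] t by auto
  have "contrA p q t (Edata p t i) (Edata p t j) y n =
     (if i then p ^ k else 1) * (- (1 - t ^ k) / ((1 - p ^ k) * of_nat k)) * ((1 - inverse t ^ k) / ((1 - p ^ k) * of_nat k))
      * (of_nat k * (1 - p ^ k) * (1 - q ^ k) / (1 - t ^ k)) * y ^ k"
    unfolding contrA_def Edata_def fst_conv k_def[symmetric] etaA_pos[OF k0] etaA_neg[OF k0] ka_def ..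
  also have "\<dots> = - (1 - inverse t ^ k) * (1 - q ^ k) / (of_nat k * (1 - p ^ k)) * ((if i then p ^ k else 1) * y ^ k)"
    by (rule atomEA) (use nz in auto)
  also have "\<dots> = cc p (inverse t) q k * ((if i then p else 1) * y) ^ k"
    by (simp add: cc_def power_mult_distrib)
  finally show ?thesis unfolding k_def .
qed

lemma contrB_E:
  fixes p q t y :: complex
  assumes p: "norm p < 1" and t: "\<forall>k::nat. k > 0 \<longrightarrow> t ^ k \<noteq> 1"
    and nz0: "p \<noteq> 0" "q \<noteq> 0" "t \<noteq> 0"
  shows "contrB p q t (Edata p t i) (Edata p t j) y n = cc p (inverse t) q (Suc n) * (((if i then inverse p else 1) * p * t / q) * inverse y) ^ Suc n"
proof -
  define k where "k = Suc n"
  have k0: "k > 0" unfolding k_def by simp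
  have nz: "of_nat k \<noteq> (0::complex)" "1 - p ^ k \<noteq> 0" "1 - t ^ k \<noteq> 0"
    using k0 pow_ne1[OF p, of k] t by auto
  have "contrB p q t (Edata p t i) (Edata p t j) y n =
     (if i then inverse p ^ k else 1) * (- (1 - inverse t ^ k) * p ^ k / ((1 - p ^ k) * of_nat k)) * ((1 - t ^ k) * p ^ k / ((1 - p ^ k) * of_nat k))
      * (of_nat k * (1 - p ^ k) / (q ^ k * inverse t ^ k * p ^ k) * (1 - q ^ k) / (1 - t ^ k)) * inverse y ^ k"
    unfolding contrB_def Edata_def snd_conv k_def[symmetric] etaB_pos[OF k0] etaB_neg[OF k0] kb_def qtp_pow ..
  also have "\<dots> = - (1 - inverse t ^ k) * (1 - q ^ k) / (of_nat k * (1 - p ^ k)) * ((if i then inverse p ^ k else 1) * p ^ k / (inverse t ^ k * q ^ k) * inverse y ^ k)"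
    by (rule atomEB) (use nz nz0 in auto)
  also have "\<dots> = cc p (inverse t) q k * (((if i then inverse p else 1) * p * t / q) * inverse y) ^ k"
    by (simp add: cc_def power_mult_distrib power_divide power_inverse divide_inverse)
  finally show ?thesis unfolding k_def .
qed

lemma contrA_F:
  fixes p q t y :: complex
  assumes p: "norm p < 1" and t: "\<forall>k::nat. k > 0 \<longrightarrow> t ^ k \<noteq> 1"
  shows "contrA p q t (Fdata p q t i) (Fdata p q t j) y n = cc p (inverse t) q (Suc n) * ((if i then p else 1) * (gam q t * gam q t) * y) ^ Suc n"
proof -
  define k where "k = Suc n"
  have k0: "k > 0" unfolding k_def by simp
  have nz: "of_nat k \<noteq> (0::complex)" "1 - p ^ k \<noteq> 0" "1 - t ^ k \<noteq> 0"
    using k0 pow_ne1[OF p, of k] t by auto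
  have "contrA p q t (Fdata p q t i) (Fdata p q t j) y n =
     (if i then p ^ k else 1) * ((1 - t ^ k) * gam q t ^ k / ((1 - p ^ k) * of_nat k)) * (- ((1 - inverse t ^ k) * gam q t ^ k / ((1 - p ^ k) * of_nat k)))
      * (of_nat k * (1 - p ^ k) * (1 - q ^ k) / (1 - t ^ k)) * y ^ k"
    unfolding contrA_def Fdata_def fst_conv k_def[symmetric] xiA_pos[OF k0] xiA_neg[OF k0] ka_def ..
  also have "\<dots> = - (1 - inverse t ^ k) * (1 - q ^ k) / (of_nat k * (1 - p ^ k)) * ((if i then p ^ k else 1) * (gam q t ^ k * gam q t ^ k) * y ^ k)"
    by (rule atomFA) (use nz in auto)
  also have "\<dots> = cc p (inverse t) q k * ((if i then p else 1) * (gam q t * gam q t) * y) ^ k"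
    by (simp add: cc_def power_mult_distrib)
  finally show ?thesis unfolding k_def .
qed

lemma contrB_F:
  fixes p q t y :: complex
  assumes p: "norm p < 1" and t: "\<forall>k::nat. k > 0 \<longrightarrow> t ^ k \<noteq> 1"
    and nz0: "p \<noteq> 0" "q \<noteq> 0" "t \<noteq> 0"
  shows "contrB p q t (Fdata p q t i) (Fdata p q t j) y n = cc p (inverse t) q (Suc n) *
     (((if i then inverse p else 1) * p * (inverse (gam q t) * inverse (gam q t)) * t / q) * inverse y) ^ Suc n"
proof -
  define k where "k = Suc n"
  have k0: "k > 0" unfolding k_def by simp
  have nz: "of_nat k \<noteq> (0::complex)" "1 - p ^ k \<noteq> 0" "1 - t ^ k \<noteq> 0"
    using k0 pow_ne1[OF p, of k] t by auto
  have "contrB p q t (Fdata p q t i) (Fdata p q t j) y n =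
     (if i then inverse p ^ k else 1) * ((1 - inverse t ^ k) * inverse (gam q t) ^ k * p ^ k / ((1 - p ^ k) * of_nat k))
      * (- ((1 - t ^ k) * inverse (gam q t) ^ k * p ^ k / ((1 - p ^ k) * of_nat k)))
      * (of_nat k * (1 - p ^ k) / (q ^ k * inverse t ^ k * p ^ k) * (1 - q ^ k) / (1 - t ^ k)) * inverse y ^ k"
    unfolding contrB_def Fdata_def snd_conv k_def[symmetric] xiB_pos[OF k0] xiB_neg[OF k0] kb_def qtp_pow ..
  also have "\<dots> = - (1 - inverse t ^ k) * (1 - q ^ k) / (of_nat k * (1 - p ^ k)) *
      ((if i then inverse p ^ k else 1) * p ^ k * (inverse (gam q t) ^ k * inverse (gam q t) ^ k) / (inverse t ^ k * q ^ k) * inverse y ^ k)"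
    by (rule atomFB) (use nz nz0 in auto)
  also have "\<dots> = cc p (inverse t) q k * (((if i then inverse p else 1) * p * (inverse (gam q t) * inverse (gam q t)) * t / q) * inverse y) ^ k"
    by (simp add: cc_def power_mult_distrib power_divide power_inverse divide_inverse)
  finally show ?thesis unfolding k_def .
qed

definition Zs :: "complex \<Rightarrow> complex \<Rightarrow> complex set" where
  "Zs p c = range (\<lambda>k::int. c * p powi k)"

lemma theta_p_mult:
  fixes p x :: complex assumes p: "norm p < 1" and p0: "p \<noteq> 0" and x: "x \<noteq> 0"
  shows "theta p (p * x) = - theta p x / x"
proof (cases "x = 1")
  case True
  have "qpoch 1 p = 0" using qp_rec[OF p, of 1] by simp
  then show ?thesis using True p0 by (simp add: theta_def)
next
  case False
  have e1: "qpoch (p * x) p = qpoch x p / (1 - x)" using qp_rec[OF p, of x] False by simp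
  have e2: "qpoch (inverse x) p = (1 - inverse x) * qpoch (p / x) p"
    using qp_rec[OF p, of "inverse x"] by (simp only: divide_inverse)
  have e3: "p / (p * x) = inverse x" using p0 x by (simp add: field_simps)
  have "theta p (p * x) = qpoch p p * (qpoch x p / (1 - x)) * ((1 - inverse x) * qpoch (p / x) p)"
    unfolding theta_def e3 e1 e2 ..
  also have "\<dots> = theta p x * ((1 - inverse x) / (1 - x))"
    unfolding theta_def by (simp only: divide_inverse mult_ac)
  also have "(1 - inverse x) / (1 - x) = - 1 / x" using x False
    by (simp add: field_simps)
  finally show ?thesis by simp
qed

lemma theta_inverse:
  fixes p x :: complex assumes p: "norm p < 1" and p0: "p \<noteq> 0" and x: "x \<noteq> 0"
  shows "theta p (inverse x) = - theta p x / x"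
proof -
  have a1: "p / inverse x = p * x" by (simp add: divide_inverse)
  have a2: "p / (p * x) = inverse x" using p0 x by (simp add: field_simps)
  have "theta p (inverse x) = theta p (p * x)"
    unfolding theta_def a1 a2 by (simp only: mult_ac)
  then show ?thesis using theta_p_mult[OF p p0 x] by simp
qed

lemma pow_neq1_int:
  fixes p :: complex assumes "norm p < 1" "p \<noteq> 0"
  shows "p ^ Suc n \<noteq> 1"
  using pow_ne1[OF assms(1), of "Suc n"] by simp

lemma theta_nz:
  fixes p x :: complex assumes p: "norm p < 1" "p \<noteq> 0" and x: "x \<notin> Zs p 1"
  shows "theta p x \<noteq> 0"
proof -
  have "qpoch p p \<noteq> 0"
  proof
    assume "qpoch p p = 0"
    then obtain n where "p * p ^ n = 1" using qp_zero[OF p(1)] by blast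
    then show False using pow_neq1_int[OF p, of n] by simp
  qed
  moreover have "qpoch x p \<noteq> 0"
  proof
    assume "qpoch x p = 0"
    then obtain n where n: "x * p ^ n = 1" using qp_zero[OF p(1)] by blast
    then have "x = 1 * p powi (- int n)" using p(2)
      by (simp add: power_int_minus field_simps)
    then show False using x unfolding Zs_def by blast
  qed
  moreover have "qpoch (p / x) p \<noteq> 0"
  proof
    assume "qpoch (p / x) p = 0"
    then obtain n where n: "p / x * p ^ n = 1" using qp_zero[OF p(1)] by blast
    then have "x \<noteq> 0" by auto
    with n have "x = p ^ Suc n"
      by (simp add: field_simps)
    then have "x = 1 * p powi (int (Suc n))" by (metis power_int_of_nat mult_1)
    then show False using x unfolding Zs_def by blast
  qed
  ultimately show ?thesis by (simp add: theta_def)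
qed

lemma theta_nz_c:
  fixes p c u :: complex assumes p: "norm p < 1" "p \<noteq> 0" and c: "c \<noteq> 0" and u: "u \<notin> Zs p (inverse c)"
  shows "theta p (c * u) \<noteq> 0"
proof (rule theta_nz[OF p])
  show "c * u \<notin> Zs p 1"
  proof
    assume "c * u \<in> Zs p 1"
    then obtain k where "c * u = 1 * p powi k" unfolding Zs_def by blast
    then have "u = inverse c * p powi k" using c by (simp add: field_simps)
    then show False using u unfolding Zs_def by blast
  qed
qed

lemma finite_powi_band:
  fixes a m M :: real assumes a: "0 < a" "a < 1" and m: "0 < m"
  shows "finite {k::int. m < a powi k \<and> a powi k < M}"
proof (cases "M > 0")
  case False
  have "\<not> (m < a powi k \<and> a powi k < M)" for k using m False by linarith
  then have "{k::int. m < a powi k \<and> a powi k < M} = {}" by blast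
  then show ?thesis by (metis finite.emptyI)
next
  case True
  obtain N where N: "a ^ N < m" using real_arch_pow_inv[OF m a(2)] by blast
  obtain N' where N': "a ^ N' < 1 / M" using real_arch_pow_inv[of "1/M" a] True a by auto
  have "{k::int. m < a powi k \<and> a powi k < M} \<subseteq> {- int N' .. int N}"
  proof
    fix k :: int assume k: "k \<in> {k::int. m < a powi k \<and> a powi k < M}"
    show "k \<in> {- int N' .. int N}"
    proof (cases "k \<ge> 0")
      case True
      have "a powi k = a ^ nat k" using True by (simp add: power_int_def)
      with k have "m < a ^ nat k" by simp
      have "nat k < N"
      proof (rule ccontr)
        assume "\<not> nat k < N"
        then have "a ^ nat k \<le> a ^ N" using a by (intro power_decreasing) auto
        with N \<open>m < a ^ nat k\<close> show False by simp
      qed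
      then show ?thesis using True by simp
    next
      case False
      have "a powi k = inverse (a ^ nat (- k))" using False by (simp add: power_int_def power_inverse)
      with k have "inverse (a ^ nat (- k)) < M" by simp
      then have "1 / M < a ^ nat (- k)" using True a
        by (metis divide_less_eq inverse_eq_divide inverse_less_imp_less mult.commute nonzero_mult_div_cancel_left zero_less_power less_irrefl)
      have "nat (- k) < N'"
      proof (rule ccontr)
        assume "\<not> nat (- k) < N'"
        then have "a ^ nat (- k) \<le> a ^ N'" using a by (intro power_decreasing) auto
        with N' \<open>1 / M < a ^ nat (- k)\<close> show False by simp
      qed
      then show ?thesis using False by simp
    qed
  qed
  then show ?thesis by (rule finite_subset) simp
qed

lemma discrete_Zs:
  fixes p c :: complex assumes p: "norm p < 1" "p \<noteq> 0" and c: "c \<noteq> 0"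
  shows "discrete_Cstar (Zs p c)"
  unfolding discrete_Cstar_def
proof (intro conjI allI impI)
  show "0 \<notin> Zs p c" using p c unfolding Zs_def by auto
next
  fix x :: complex assume x: "x \<noteq> 0"
  define U where "U = {z::complex. norm x / 2 < norm z \<and> norm z < 2 * norm x}"
  have oU: "open U" unfolding U_def by (intro open_Collect_conj open_Collect_less continuous_intros)
  have xU: "x \<in> U" using x unfolding U_def by simp
  define K where "K = {k::int. norm x / (2 * norm c) < norm p powi k \<and> norm p powi k < 2 * norm x / norm c}"
  have fK: "finite K" unfolding K_def
    by (rule finite_powi_band) (use p c x in auto)
  have "Zs p c \<inter> U \<subseteq> (\<lambda>k. c * p powi k) ` K"
  proof
    fix z assume "z \<in> Zs p c \<inter> U"
    then obtain k where z: "z = c * p powi k" and zU: "z \<in> U" unfolding Zs_def by blast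
    have nz: "norm z = norm c * norm p powi k" using z by (simp add: norm_mult norm_power_int)
    have z0: "norm x / 2 < norm z" "norm z < 2 * norm x"
      using zU unfolding U_def by auto
    have z1: "norm x / 2 < norm c * norm p powi k" "norm c * norm p powi k < 2 * norm x"
      using z0 unfolding nz by auto
    have cpos: "norm c > 0" using c by simp
    have "norm x / (2 * norm c) < norm p powi k"
      using z1(1) cpos by (simp add: field_simps)
    moreover have "norm p powi k < 2 * norm x / norm c"
      using z1(2) cpos by (simp add: field_simps)
    ultimately have "k \<in> K" unfolding K_def by simp
    then show "z \<in> (\<lambda>k. c * p powi k) ` K" using z by blast
  qed
  then have fin: "finite (Zs p c \<inter> U)" using fK by (meson finite_imageI finite_subset)
  show "\<not> x islimpt Zs p c"
  proof
    assume "x islimpt Zs p c"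
    then have "x islimpt ((Zs p c \<inter> U) \<union> (- U))" by (rule islimpt_subset) blast
    then have "x islimpt (Zs p c \<inter> U) \<or> x islimpt (- U)" by (simp add: islimpt_Un)
    moreover have "\<not> x islimpt (Zs p c \<inter> U)" using fin by (rule islimpt_finite)
    moreover have "\<not> x islimpt (- U)"
    proof
      assume "x islimpt (- U)"
      moreover have "closed (- U)" using oU by (simp add: closed_Compl)
      ultimately have "x \<in> - U" using closed_limpt by blast
      with xU show False by simp
    qed
    ultimately show False by blast
  qed
qed

lemma discrete_Un:
  "discrete_Cstar A \<Longrightarrow> discrete_Cstar B \<Longrightarrow> discrete_Cstar (A \<union> B)"
  unfolding discrete_Cstar_def by (auto simp: islimpt_Un)

lemma mero_quot:
  fixes N D :: "complex \<Rightarrow> complex"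
  assumes N: "N holomorphic_on U" and D: "D holomorphic_on U" and U: "open U" "connected U"
    and s: "s \<in> U" and w: "w \<in> U" "D w \<noteq> 0"
  shows "\<exists>n L. ((\<lambda>y. (y - s) ^ n * (N y / D y)) \<longlongrightarrow> L) (at s)"
proof -
  have cN: "isCont N s" and cD: "isCont D s"
    using holomorphic_on_imp_continuous_on[OF N] holomorphic_on_imp_continuous_on[OF D] U(1) s
    by (auto simp: continuous_on_eq_continuous_at)
  show ?thesis
  proof (cases "D s = 0")
    case False
    have "isCont (\<lambda>y. (y - s) ^ 0 * (N y / D y)) s"
      using cN cD False by (intro continuous_intros) auto
    then have "((\<lambda>y. (y - s) ^ 0 * (N y / D y)) \<longlongrightarrow> (s - s) ^ 0 * (N s / D s)) (at s)"
      by (simp add: isCont_def)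
    then show ?thesis by blast
  next
    case True
    have nc: "\<not> D constant_on U"
    proof
      assume "D constant_on U"
      then obtain c where "\<forall>x\<in>U. D x = c" unfolding constant_on_def by blast
      then show False using True s w by auto
    qed
    obtain g r n where r: "0 < r" "ball s r \<subseteq> U" and g: "g holomorphic_on ball s r"
      and fac: "\<And>w. w \<in> ball s r \<Longrightarrow> D w = (w - s) ^ n * g w"
      and gnz: "\<And>w. w \<in> ball s r \<Longrightarrow> g w \<noteq> 0"
      using holomorphic_factor_zero_nonconstant[OF D U s True nc] by metis
    have cg: "isCont g s"
      using holomorphic_on_imp_continuous_on[OF g] r by (auto simp: continuous_on_eq_continuous_at)
    have gs: "g s \<noteq> 0" using gnz r by simp
    have lim: "((\<lambda>y. N y / g y) \<longlongrightarrow> N s / g s) (at s)"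
      using cN cg gs by (intro tendsto_divide) (auto simp: isCont_def intro: tendsto_within_subset)
    have "((\<lambda>y. (y - s) ^ n * (N y / D y)) \<longlongrightarrow> N s / g s) (at s)"
    proof (rule Lim_transform_within_open[OF lim open_ball[of s r]])
      show "s \<in> ball s r" using r by simp
      fix x assume x: "x \<in> ball s r" "x \<noteq> s"
      have "(x - s) ^ n \<noteq> 0" using x by simp
      then show "N x / g x = (x - s) ^ n * (N x / D x)"
        using fac[OF x(1)] gnz[OF x(1)] by (simp add: field_simps)
    qed
    then show ?thesis by blast
  qed
qed

lemma qp_holo_lin:
  fixes p c :: complex assumes p: "norm p < 1"
  shows "(\<lambda>y. qpoch (c * y) p) holomorphic_on S"
proof -
  have "((\<lambda>x. qpoch x p) \<circ> (\<lambda>y. c * y)) holomorphic_on S"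
    by (rule holomorphic_on_compose_gen[OF _ qp_holo[OF p]]) (auto intro: holomorphic_intros)
  then show ?thesis by (simp add: o_def)
qed

lemma qp_holo_inv:
  fixes p c :: complex assumes p: "norm p < 1" and S: "0 \<notin> S"
  shows "(\<lambda>y. qpoch (c * inverse y) p) holomorphic_on S"
proof -
  have "((\<lambda>x. qpoch x p) \<circ> (\<lambda>y. c * inverse y)) holomorphic_on S"
    by (rule holomorphic_on_compose_gen[OF _ qp_holo[OF p]]) (use S in \<open>auto intro!: holomorphic_intros\<close>)
  then show ?thesis by (simp add: o_def)
qed

lemma qp_zero_Zs:
  fixes p c y :: complex assumes p: "norm p < 1" "p \<noteq> 0" and c: "c \<noteq> 0" and z: "qpoch (c * y) p = 0"
  shows "y \<in> Zs p (inverse c)"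
proof -
  obtain n where n: "c * y * p ^ n = 1" using z qp_zero[OF p(1)] by blast
  then have "y = inverse c * p powi (- int n)" using p c
    by (simp add: power_int_minus field_simps)
  then show ?thesis unfolding Zs_def by blast
qed

lemma qp_zero_Zs_inv:
  fixes p c y :: complex assumes p: "norm p < 1" "p \<noteq> 0" and z: "qpoch (c * inverse y) p = 0"
  shows "y \<in> Zs p c"
proof -
  obtain n where n: "c * inverse y * p ^ n = 1" using z qp_zero[OF p(1)] by blast
  then have "y \<noteq> 0" by auto
  with n have "y = c * p ^ n" by (simp add: field_simps)
  then have "y = c * p powi (int n)" by simp
  then show ?thesis unfolding Zs_def by blast
qed

lemma Phi_small_den:
  fixes p a b x :: complex assumes p: "norm p < 1"
    and x: "(1 + norm a) * (1 + norm b) * norm x < 1"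
  shows "qpoch (a * x) p * qpoch (b * x) p \<noteq> 0"
  using norm_lt_helpers[OF x] qp_nz_small[OF p] by simp

lemma M_pos: "0 < (1 + norm (a::complex)) * (1 + norm (b::complex))"
  by (simp add: add_pos_nonneg)

lemma CF:
  fixes p q t a b cA cB :: complex
  assumes p: "norm p < 1" "p \<noteq> 0" and ab: "a \<noteq> 0" "b \<noteq> 0" and cs: "cA \<noteq> 0" "cB \<noteq> 0"
    and hA: "\<And>y n. contrA p q t V W y n = cc p a b (Suc n) * (cA * y) ^ Suc n"
    and hB: "\<And>y n. contrB p q t V W y n = cc p a b (Suc n) * (cB * inverse y) ^ Suc n"
  shows "contraction_fun p q t V W (\<lambda>y. Phi p a b (cA * y) * Phi p a b (cB * inverse y))"
proof -
  define M where "M = (1 + norm a) * (1 + norm b)"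
  have M0: "M > 0" unfolding M_def by (rule M_pos)
  define fA where "fA y = Phi p a b (cA * y)" for y
  define fB where "fB y = Phi p a b (cB * inverse y)" for y
  define SA where "SA = Zs p (inverse (a * cA)) \<union> Zs p (inverse (b * cA))"
  define SB where "SB = Zs p (a * cB) \<union> Zs p (b * cB)"
  have U: "open (- {0::complex})" "connected (- {0::complex})"
    by (auto intro: connected_punctured_universe)
  have fA_eq: "fA y = qpoch (cA * y) p * qpoch ((a * b * cA) * y) p / (qpoch ((a * cA) * y) p * qpoch ((b * cA) * y) p)" for y
    unfolding fA_def Phi_def by (simp add: mult_ac)
  have fB_eq: "fB y = qpoch (cB * inverse y) p * qpoch ((a * b * cB) * inverse y) p / (qpoch ((a * cB) * inverse y) p * qpoch ((b * cB) * inverse y) p)" for y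
    unfolding fB_def Phi_def by (simp add: mult_ac)
  have mA: "meromorphic_Cstar fA SA"
    unfolding meromorphic_Cstar_def
  proof (intro conjI ballI)
    show dA: "discrete_Cstar SA" unfolding SA_def
      using ab cs p by (intro discrete_Un discrete_Zs) auto
    have den: "qpoch ((a * cA) * y) p * qpoch ((b * cA) * y) p \<noteq> 0" if "y \<notin> SA" for y
      using that qp_zero_Zs[OF p, of "a * cA" y] qp_zero_Zs[OF p, of "b * cA" y] ab cs
      unfolding SA_def by auto
    show "fA holomorphic_on UNIV - insert 0 SA"
      unfolding fA_eq[abs_def]
      by (intro holomorphic_intros qp_holo_lin[OF p(1)]) (use den in auto)
    fix s assume s: "s \<in> SA"
    have s0: "s \<noteq> 0" using dA s unfolding discrete_Cstar_def by auto
    define w where "w = complex_of_real (1 / (2 * M * norm cA))"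
    have nw: "norm w = 1 / (2 * M * norm cA)" unfolding w_def norm_of_real using M0 cs by simp
    have "M * norm (cA * w) = 1 / 2" using M0 cs by (simp add: norm_mult nw)
    then have "(1 + norm a) * (1 + norm b) * norm (cA * w) < 1" unfolding M_def by simp
    then have "qpoch (a * (cA * w)) p * qpoch (b * (cA * w)) p \<noteq> 0" by (rule Phi_small_den[OF p(1)])
    then have wD: "qpoch ((a * cA) * w) p * qpoch ((b * cA) * w) p \<noteq> 0" by (simp add: mult_ac)
    have w0: "w \<in> - {0}" using nw M0 cs by auto
    show "\<exists>n L. ((\<lambda>y. (y - s) ^ n * fA y) \<longlongrightarrow> L) (at s)"
      unfolding fA_eq
      by (rule mero_quot[where N="\<lambda>y. qpoch (cA * y) p * qpoch ((a * b * cA) * y) p"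
            and D="\<lambda>y. qpoch ((a * cA) * y) p * qpoch ((b * cA) * y) p", OF _ _ U _ w0 wD]) (use s0 in \<open>auto intro!: holomorphic_intros qp_holo_lin[OF p(1)]\<close>)
  qed
  have mB: "meromorphic_Cstar fB SB"
    unfolding meromorphic_Cstar_def
  proof (intro conjI ballI)
    show dB: "discrete_Cstar SB" unfolding SB_def
      using ab cs p by (intro discrete_Un discrete_Zs) auto
    have den: "qpoch ((a * cB) * inverse y) p * qpoch ((b * cB) * inverse y) p \<noteq> 0" if "y \<notin> SB" for y
      using that qp_zero_Zs_inv[OF p, of "a * cB" y] qp_zero_Zs_inv[OF p, of "b * cB" y]
      unfolding SB_def by auto
    show "fB holomorphic_on UNIV - insert 0 SB"
      unfolding fB_eq[abs_def]
      by (intro holomorphic_intros qp_holo_inv[OF p(1)]) (use den in auto)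
    fix s assume s: "s \<in> SB"
    have s0: "s \<noteq> 0" using dB s unfolding discrete_Cstar_def by auto
    define w where "w = complex_of_real (2 * M * norm cB)"
    have nw: "norm w = 2 * M * norm cB" unfolding w_def norm_of_real using M0 cs by simp
    have "M * norm (cB * inverse w) = M * (norm cB * inverse (2 * M * norm cB))" by (simp only: norm_mult norm_inverse nw)
    also have "\<dots> = 1 / 2" using M0 cs by (simp add: field_simps)
    finally have "M * norm (cB * inverse w) = 1 / 2" .
    then have "(1 + norm a) * (1 + norm b) * norm (cB * inverse w) < 1" unfolding M_def by simp
    then have "qpoch (a * (cB * inverse w)) p * qpoch (b * (cB * inverse w)) p \<noteq> 0" by (rule Phi_small_den[OF p(1)])
    then have wD: "qpoch ((a * cB) * inverse w) p * qpoch ((b * cB) * inverse w) p \<noteq> 0" by (simp add: mult_ac)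
    have w0: "w \<in> - {0}" using nw M0 cs by auto
    show "\<exists>n L. ((\<lambda>y. (y - s) ^ n * fB y) \<longlongrightarrow> L) (at s)"
      unfolding fB_eq
      by (rule mero_quot[where N="\<lambda>y. qpoch (cB * inverse y) p * qpoch ((a * b * cB) * inverse y) p"
            and D="\<lambda>y. qpoch ((a * cB) * inverse y) p * qpoch ((b * cB) * inverse y) p", OF _ _ U _ w0 wD]) (use s0 in \<open>auto intro!: holomorphic_intros qp_holo_inv[OF p(1)]\<close>)
  qed
  have serA: "summable (contrA p q t V W y) \<and> fA y = exp (suminf (contrA p q t V W y))"
    if "0 < norm y" "norm y < 1 / (M * norm cA)" for y
  proof -
    have "M * norm (cA * y) < 1" using that M0 cs by (simp add: norm_mult field_simps)
    then have x: "(1 + norm a) * (1 + norm b) * norm (cA * y) < 1" unfolding M_def .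
    have e: "contrA p q t V W y = (\<lambda>n. cc p a b (Suc n) * (cA * y) ^ Suc n)" using hA by (intro ext) simp
    show ?thesis unfolding e fA_def using GA[OF p(1) x] by simp
  qed
  have serB: "summable (contrB p q t V W y) \<and> fB y = exp (suminf (contrB p q t V W y))"
    if "M * norm cB < norm y" for y
  proof -
    have y0: "norm y > 0" using that M0 by (smt (verit) mult_nonneg_nonneg norm_ge_zero)
    have "M * norm (cB * inverse y) = M * norm cB * inverse (norm y)" by (simp only: norm_mult norm_inverse mult.assoc)
    also have "\<dots> < 1" using that y0 by (simp add: field_simps)
    finally have "M * norm (cB * inverse y) < 1" .
    then have x: "(1 + norm a) * (1 + norm b) * norm (cB * inverse y) < 1" unfolding M_def .
    have e: "contrB p q t V W y = (\<lambda>n. cc p a b (Suc n) * (cB * inverse y) ^ Suc n)" using hB by (intro ext) simp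
    show ?thesis unfolding e fB_def using GA[OF p(1) x] by simp
  qed
  have r0: "1 / (M * norm cA) > 0" using M0 cs by simp
  show ?thesis unfolding contraction_fun_def
    apply (rule exI[of _ fA], rule exI[of _ fB], rule exI[of _ SA], rule exI[of _ SB])
    apply (intro conjI)
    subgoal using mA unfolding fA_def .
    subgoal using mB unfolding fB_def .
    subgoal using serA r0 unfolding fA_def by blast
    subgoal using serB unfolding fB_def by blast
    subgoal by (simp add: fA_def fB_def)
    done
qed

lemma atom_theta4:
  fixes c A1 A2 A3 A4 B1 B2 B3 B4 :: complex assumes c: "c \<noteq> 0"
  shows "(A1 * A2 / (B1 * B2)) * (A3 * A4 / (B3 * B4)) = (c * A1 * A4) * (c * A2 * A3) / ((c * B1 * B4) * (c * B2 * B3))"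
proof -
  have "(c * A1 * A4) * (c * A2 * A3) / ((c * B1 * B4) * (c * B2 * B3)) =
        (A1 * A2 / (B1 * B2)) * (A3 * A4 / (B3 * B4)) * ((c * inverse c) * (c * inverse c))"
    by (simp only: divide_inverse inverse_mult_distrib mult_ac)
  then show ?thesis using c by simp
qed

lemma atom_shift:
  fixes A B C D y1 y2 y3 y4 :: complex assumes "y1 * y2 = y3 * y4" "y1 * y2 \<noteq> 0"
  shows "(- A / y1) * (- B / y2) / ((- C / y3) * (- D / y4)) = A * B / (C * D)"
proof -
  have "(- A / y1) * (- B / y2) / ((- C / y3) * (- D / y4)) = A * B / (C * D) * ((y3 * y4) * inverse (y1 * y2))"
    by (simp only: divide_inverse inverse_mult_distrib mult_ac inverse_minus_eq mult_minus_left mult_minus_right minus_minus inverse_inverse_eq)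
  then show ?thesis using assms by simp
qed

lemma atom_shift4:
  fixes A B C D E y1 y2 y3 y4 y :: complex assumes "y1 * y2 * y3 * y4 = y ^ 4" "y \<noteq> 0"
  shows "(- A / y) ^ 4 / ((- B / y1) * (- C / y2) * (- D / y3) * (- E / y4)) = A ^ 4 / (B * C * D * E)"
proof -
  have "(- A / y) ^ 4 / ((- B / y1) * (- C / y2) * (- D / y3) * (- E / y4)) = A ^ 4 / (B * C * D * E) * ((y1 * y2 * y3 * y4) * inverse (y ^ 4))"
    by (simp only: divide_inverse inverse_mult_distrib mult_ac inverse_minus_eq mult_minus_left mult_minus_right minus_minus inverse_inverse_eq power4_eq_xxxx)
  then show ?thesis using assms by simp
qed

lemma atom_gE:
  fixes A G1 G2 G3 H1 H2 H3 :: complex assumes "G1 \<noteq> 0" "G2 \<noteq> 0" "H3 \<noteq> 0"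
  shows "G1 * G2 * G3 / (H1 * H2 * H3) * (A * H3 / (G2 * G1)) = A * G3 / (H2 * H1)"
proof -
  have "G1 * G2 * G3 / (H1 * H2 * H3) * (A * H3 / (G2 * G1)) = A * G3 / (H2 * H1) * ((G1 * inverse G1) * (G2 * inverse G2) * (H3 * inverse H3))"
    by (simp only: divide_inverse inverse_mult_distrib mult_ac)
  then show ?thesis using assms by simp
qed

lemma atom_gF:
  fixes A G1 G2 G3 H1 H2 H3 :: complex assumes "G3 \<noteq> 0" "H1 \<noteq> 0" "H2 \<noteq> 0"
  shows "inverse (G1 * G2 * G3 / (H1 * H2 * H3)) * (G3 * A / (H1 * H2)) = H3 * A / (G1 * G2)"
proof -
  have "inverse (G1 * G2 * G3 / (H1 * H2 * H3)) * (G3 * A / (H1 * H2)) = H3 * A / (G1 * G2) * ((G3 * inverse G3) * (H1 * inverse H1) * (H2 * inverse H2))"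
    by (simp only: divide_inverse inverse_mult_distrib inverse_inverse_eq mult_ac)
  then show ?thesis using assms by simp
qed

lemma atom_omE:
  fixes A B1 B2 B3 C1 C2 :: complex assumes "B3 \<noteq> 0"
  shows "inverse (B1 * B2 * B3 / A ^ 3) * (A * B3 / (C1 * C2)) = A ^ 4 / (B1 * B2 * C1 * C2)"
proof -
  have "inverse (B1 * B2 * B3 / A ^ 3) * (A * B3 / (C1 * C2)) = A ^ 4 / (B1 * B2 * C1 * C2) * (B3 * inverse B3)"
    by (simp only: divide_inverse inverse_mult_distrib inverse_inverse_eq mult_ac power4_eq_xxxx power3_eq_cube)
  then show ?thesis using assms by simp
qed

lemma atom_omF:
  fixes A B1 B2 B3 C1 C2 :: complex assumes "B3 \<noteq> 0"
  shows "inverse (B1 * B2 * B3 / A ^ 3) * (B3 * A / (C1 * C2)) = A ^ 4 / (B1 * B2 * C1 * C2)"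
  using atom_omE[OF assms] by (simp add: mult.commute)

definition ThE :: "complex \<Rightarrow> complex \<Rightarrow> complex \<Rightarrow> complex \<Rightarrow> complex" where
  "ThE p q t y = theta p y * theta p (q * y / t) / (theta p (y / t) * theta p (q * y))"
definition ThF :: "complex \<Rightarrow> complex \<Rightarrow> complex \<Rightarrow> complex \<Rightarrow> complex" where
  "ThF p q t y = theta p (t * y / q) * theta p y / (theta p (y / q) * theta p (t * y))"
definition KK :: "complex \<Rightarrow> complex \<Rightarrow> complex \<Rightarrow> complex \<Rightarrow> complex" where
  "KK p q t u = theta p u ^ 4 / (theta p (u / q) * theta p (t * u) * theta p (u / t) * theta p (q * u))"

definition fEf :: "complex \<Rightarrow> complex \<Rightarrow> complex \<Rightarrow> bool \<Rightarrow> complex \<Rightarrow> complex" where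
  "fEf p q t i y = Phi p (inverse t) q ((if i then p else 1) * y) *
      Phi p (inverse t) q (((if i then inverse p else 1) * p * t / q) * inverse y)"
definition fFf :: "complex \<Rightarrow> complex \<Rightarrow> complex \<Rightarrow> bool \<Rightarrow> complex \<Rightarrow> complex" where
  "fFf p q t i y = Phi p (inverse t) q ((if i then p else 1) * (gam q t * gam q t) * y) *
      Phi p (inverse t) q (((if i then inverse p else 1) * p * (inverse (gam q t) * inverse (gam q t)) * t / q) * inverse y)"

lemma gam_sq: "q \<noteq> 0 \<Longrightarrow> t \<noteq> 0 \<Longrightarrow> gam q t * gam q t = t / q"
proof -
  assume "q \<noteq> 0" "t \<noteq> 0"
  have "csqrt (q / t) * csqrt (q / t) = q / t" using power2_csqrt[of "q / t"] by (simp add: power2_eq_square)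
  then show ?thesis unfolding gam_def by (simp add: inverse_mult_distrib[symmetric])
qed

lemma qp_p_nz: "norm p < 1 \<Longrightarrow> p \<noteq> 0 \<Longrightarrow> qpoch p p \<noteq> 0"
  using qp_zero[of p p] pow_neq1_int[of p] by (metis power_Suc)

lemma fEf_False:
  fixes p q t y :: complex assumes p: "norm p < 1" "p \<noteq> 0" and nz: "q \<noteq> 0" "t \<noteq> 0" "y \<noteq> 0"
  shows "fEf p q t False y = ThE p q t y"
proof -
  have e: "inverse t * q * y = q * y / t" "inverse t * y = y / t"
    "p * t / q * inverse y = p / (q * y / t)" "inverse t * q * (p / (q * y / t)) = p / y"
    "inverse t * (p / (q * y / t)) = p / (q * y)" "q * (p / (q * y / t)) = p / (y / t)"
    using nz by (simp_all add: field_simps)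
  have "fEf p q t False y =
     (qpoch y p * qpoch (q * y / t) p / (qpoch (y / t) p * qpoch (q * y) p)) *
     (qpoch (p / (q * y / t)) p * qpoch (p / y) p / (qpoch (p / (q * y)) p * qpoch (p / (y / t)) p))"
    unfolding fEf_def Phi_def if_False mult_1_left e ..
  also have "\<dots> = ThE p q t y"
    unfolding ThE_def theta_def by (rule atom_theta4[OF qp_p_nz[OF p]])
  finally show ?thesis .
qed

lemma ThE_p:
  fixes p q t y :: complex assumes p: "norm p < 1" "p \<noteq> 0" and nz: "q \<noteq> 0" "t \<noteq> 0" "y \<noteq> 0"
  shows "ThE p q t (p * y) = ThE p q t y"
proof -
  have e: "p * (q * y) / t = p * (q * y / t)" "p * y / t = p * (y / t)" "q * (p * y) = p * (q * y)"
    by (simp_all add: field_simps)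
  have t: "theta p (p * y) = - theta p y / y" "theta p (p * (q * y / t)) = - theta p (q * y / t) / (q * y / t)"
    "theta p (p * (y / t)) = - theta p (y / t) / (y / t)" "theta p (p * (q * y)) = - theta p (q * y) / (q * y)"
    by (rule theta_p_mult[OF p], use nz in simp)+
  have "ThE p q t (p * y) = (- theta p y / y) * (- theta p (q * y / t) / (q * y / t)) /
      ((- theta p (y / t) / (y / t)) * (- theta p (q * y) / (q * y)))"
    unfolding ThE_def e t ..
  also have "\<dots> = ThE p q t y" unfolding ThE_def
    by (rule atom_shift) (use nz in \<open>simp_all add: field_simps\<close>)
  finally show ?thesis .
qed

lemma fEf_True:
  fixes p q t y :: complex assumes p: "norm p < 1" "p \<noteq> 0" and nz: "q \<noteq> 0" "t \<noteq> 0" "y \<noteq> 0"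
  shows "fEf p q t True y = ThE p q t y"
proof -
  have "fEf p q t True y = fEf p q t False (p * y)"
    unfolding fEf_def using p nz by (simp add: field_simps)
  also have "\<dots> = ThE p q t (p * y)" by (rule fEf_False) (use p nz in auto)
  also have "\<dots> = ThE p q t y" by (rule ThE_p[OF p nz])
  finally show ?thesis .
qed

lemma fFf_False:
  fixes p q t y :: complex assumes p: "norm p < 1" "p \<noteq> 0" and nz: "q \<noteq> 0" "t \<noteq> 0" "y \<noteq> 0"
  shows "fFf p q t False y = ThF p q t y"
proof -
  have g1: "gam q t * gam q t = t / q" by (rule gam_sq[OF nz(1,2)])
  have g2: "inverse (gam q t) * inverse (gam q t) = q / t"
    using g1 by (metis inverse_divide inverse_mult_distrib)
  have e: "t / q * y = t * y / q" "inverse t * q * (t * y / q) = y" "inverse t * (t * y / q) = y / q" "q * (t * y / q) = t * y"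
    "p * (q / t) * t / q * inverse y = p / y" "inverse t * q * (p / y) = p / (t * y / q)"
    "inverse t * (p / y) = p / (t * y)" "q * (p / y) = p / (y / q)"
    using nz by (simp_all add: field_simps)
  have "fFf p q t False y =
     (qpoch (t * y / q) p * qpoch y p / (qpoch (y / q) p * qpoch (t * y) p)) *
     (qpoch (p / y) p * qpoch (p / (t * y / q)) p / (qpoch (p / (t * y)) p * qpoch (p / (y / q)) p))"
    unfolding fFf_def Phi_def if_False mult_1_left g1 g2 e ..
  also have "\<dots> = ThF p q t y"
    unfolding ThF_def theta_def by (rule atom_theta4[OF qp_p_nz[OF p]])
  finally show ?thesis .
qed

lemma ThF_p:
  fixes p q t y :: complex assumes p: "norm p < 1" "p \<noteq> 0" and nz: "q \<noteq> 0" "t \<noteq> 0" "y \<noteq> 0"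
  shows "ThF p q t (p * y) = ThF p q t y"
proof -
  have e: "p * (t * y) / q = p * (t * y / q)" "p * y / q = p * (y / q)" "t * (p * y) = p * (t * y)"
    by (simp_all add: field_simps)
  have t: "theta p (p * y) = - theta p y / y" "theta p (p * (t * y / q)) = - theta p (t * y / q) / (t * y / q)"
    "theta p (p * (y / q)) = - theta p (y / q) / (y / q)" "theta p (p * (t * y)) = - theta p (t * y) / (t * y)"
    by (rule theta_p_mult[OF p], use nz in simp)+
  have "ThF p q t (p * y) = (- theta p (t * y / q) / (t * y / q)) * (- theta p y / y) /
      ((- theta p (y / q) / (y / q)) * (- theta p (t * y) / (t * y)))"
    unfolding ThF_def e t ..
  also have "\<dots> = ThF p q t y" unfolding ThF_def
    by (rule atom_shift) (use nz in \<open>simp_all add: field_simps\<close>)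
  finally show ?thesis .
qed

lemma fFf_True:
  fixes p q t y :: complex assumes p: "norm p < 1" "p \<noteq> 0" and nz: "q \<noteq> 0" "t \<noteq> 0" "y \<noteq> 0"
  shows "fFf p q t True y = ThF p q t y"
proof -
  have "fFf p q t True y = fFf p q t False (p * y)"
    unfolding fFf_def using p nz by (simp add: field_simps)
  also have "\<dots> = ThF p q t (p * y)" by (rule fFf_False) (use p nz in auto)
  also have "\<dots> = ThF p q t y" by (rule ThF_p[OF p nz])
  finally show ?thesis .
qed

lemma thinv:
  fixes p a b :: complex assumes p: "norm p < 1" "p \<noteq> 0" and a: "a = inverse b" and b: "b \<noteq> 0"
  shows "theta p a = - theta p b / b"
  unfolding a by (rule theta_inverse[OF p b])

lemma ThE_inv:
  fixes p q t u :: complex assumes p: "norm p < 1" "p \<noteq> 0" and nz: "q \<noteq> 0" "t \<noteq> 0" "u \<noteq> 0"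
    and th: "theta p (q * u) \<noteq> 0" "theta p (u / t) \<noteq> 0" "theta p (q * u / t) \<noteq> 0"
  shows "ThE p q t (inverse u) = gfun p q t u * ThE p q t u"
proof -
  have t1: "theta p (inverse u) = - theta p u / u" by (rule thinv[OF p refl nz(3)])
  have t2: "theta p (q * inverse u / t) = - theta p (t * u / q) / (t * u / q)"
    by (rule thinv[OF p]) (use nz in \<open>simp_all add: field_simps\<close>)
  have t3: "theta p (inverse u / t) = - theta p (t * u) / (t * u)"
    by (rule thinv[OF p]) (use nz in \<open>simp_all add: field_simps\<close>)
  have t4: "theta p (q * inverse u) = - theta p (u / q) / (u / q)"
    by (rule thinv[OF p]) (use nz in \<open>simp_all add: field_simps\<close>)
  have "ThE p q t (inverse u) = (- theta p u / u) * (- theta p (t * u / q) / (t * u / q)) /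
     ((- theta p (t * u) / (t * u)) * (- theta p (u / q) / (u / q)))"
    unfolding ThE_def t1 t2 t3 t4 ..
  also have "\<dots> = theta p u * theta p (t * u / q) / (theta p (t * u) * theta p (u / q))"
    by (rule atom_shift) (use nz in \<open>simp_all add: field_simps\<close>)
  also have "\<dots> = gfun p q t u * ThE p q t u"
    unfolding gfun_def ThE_def by (rule atom_gE[symmetric]) (use th in auto)
  finally show ?thesis .
qed

lemma ThF_inv:
  fixes p q t u :: complex assumes p: "norm p < 1" "p \<noteq> 0" and nz: "q \<noteq> 0" "t \<noteq> 0" "u \<noteq> 0"
    and th: "theta p (t * u / q) \<noteq> 0" "theta p (u / q) \<noteq> 0" "theta p (t * u) \<noteq> 0"
  shows "ThF p q t (inverse u) = inverse (gfun p q t u) * ThF p q t u"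
proof -
  have t1: "theta p (inverse u) = - theta p u / u" by (rule thinv[OF p refl nz(3)])
  have t2: "theta p (t * inverse u / q) = - theta p (q * u / t) / (q * u / t)"
    by (rule thinv[OF p]) (use nz in \<open>simp_all add: field_simps\<close>)
  have t3: "theta p (inverse u / q) = - theta p (q * u) / (q * u)"
    by (rule thinv[OF p]) (use nz in \<open>simp_all add: field_simps\<close>)
  have t4: "theta p (t * inverse u) = - theta p (u / t) / (u / t)"
    by (rule thinv[OF p]) (use nz in \<open>simp_all add: field_simps\<close>)
  have "ThF p q t (inverse u) = (- theta p (q * u / t) / (q * u / t)) * (- theta p u / u) /
     ((- theta p (q * u) / (q * u)) * (- theta p (u / t) / (u / t)))"
    unfolding ThF_def t1 t2 t3 t4 ..
  also have "\<dots> = theta p (q * u / t) * theta p u / (theta p (q * u) * theta p (u / t))"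
    by (rule atom_shift) (use nz in \<open>simp_all add: field_simps\<close>)
  also have "\<dots> = inverse (gfun p q t u) * ThF p q t u"
    unfolding gfun_def ThF_def by (rule atom_gF[symmetric]) (use th in auto)
  finally show ?thesis .
qed

lemma KK_inv:
  fixes p q t u :: complex assumes p: "norm p < 1" "p \<noteq> 0" and nz: "q \<noteq> 0" "t \<noteq> 0" "u \<noteq> 0"
  shows "KK p q t (inverse u) = KK p q t u"
proof -
  have t1: "theta p (inverse u) = - theta p u / u" by (rule thinv[OF p refl nz(3)])
  have t2: "theta p (inverse u / q) = - theta p (q * u) / (q * u)"
    by (rule thinv[OF p]) (use nz in \<open>simp_all add: field_simps\<close>)
  have t3: "theta p (t * inverse u) = - theta p (u / t) / (u / t)"
    by (rule thinv[OF p]) (use nz in \<open>simp_all add: field_simps\<close>)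
  have t4: "theta p (inverse u / t) = - theta p (t * u) / (t * u)"
    by (rule thinv[OF p]) (use nz in \<open>simp_all add: field_simps\<close>)
  have t5: "theta p (q * inverse u) = - theta p (u / q) / (u / q)"
    by (rule thinv[OF p]) (use nz in \<open>simp_all add: field_simps\<close>)
  have "KK p q t (inverse u) = (- theta p u / u) ^ 4 / ((- theta p (q * u) / (q * u)) * (- theta p (u / t) / (u / t))
      * (- theta p (t * u) / (t * u)) * (- theta p (u / q) / (u / q)))"
    unfolding KK_def t1 t2 t3 t4 t5 ..
  also have "\<dots> = theta p u ^ 4 / (theta p (q * u) * theta p (u / t) * theta p (t * u) * theta p (u / q))"
    by (rule atom_shift4) (use nz in \<open>simp_all add: field_simps power4_eq_xxxx\<close>)
  also have "\<dots> = KK p q t u" unfolding KK_def by (simp only: mult_ac)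
  finally show ?thesis .
qed

lemma omE:
  fixes p q t x y :: complex assumes nz: "x \<noteq> 0" "q \<noteq> 0" "t \<noteq> 0"
    and th: "theta p (q * (y / x) / t) \<noteq> 0"
  shows "inverse (omega p q t x y) * ThE p q t (y / x) = KK p q t (y / x)"
proof -
  have e: "y / (q * x) = y / x / q" "t * y / x = t * (y / x)" "q * y / (t * x) = q * (y / x) / t"
    using nz by (simp_all add: field_simps)
  show ?thesis unfolding omega_def ThE_def KK_def e by (rule atom_omE[OF th])
qed

lemma omF:
  fixes p q t x y :: complex assumes nz: "x \<noteq> 0" "q \<noteq> 0" "t \<noteq> 0"
    and th: "theta p (t * (y / x) / q) \<noteq> 0"
  shows "inverse (omega' p q t x y) * ThF p q t (y / x) = KK p q t (y / x)"
proof -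
  have e: "q * y / x = q * (y / x)" "y / (t * x) = y / x / t" "t * y / (q * x) = t * (y / x) / q"
    using nz by (simp_all add: field_simps)
  have "inverse (omega' p q t x y) * ThF p q t (y / x) =
     theta p (y / x) ^ 4 / (theta p (q * (y / x)) * theta p (y / x / t) * theta p (y / x / q) * theta p (t * (y / x)))"
    unfolding omega'_def ThF_def e by (rule atom_omF[OF th])
  also have "\<dots> = KK p q t (y / x)" unfolding KK_def by (simp only: mult_ac)
  finally show ?thesis .
qed

definition T0 :: "complex \<Rightarrow> complex \<Rightarrow> complex \<Rightarrow> complex set" where
  "T0 p q t = Zs p (inverse q) \<union> Zs p t \<union> Zs p (t / q) \<union> Zs p (q / t) \<union> Zs p q \<union> Zs p (inverse t)"

lemma T0_discrete:
  fixes p q t :: complex assumes p: "norm p < 1" "p \<noteq> 0" and nz: "q \<noteq> 0" "t \<noteq> 0"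
  shows "discrete_Cstar (T0 p q t)"
  unfolding T0_def using p nz by (intro discrete_Un discrete_Zs) auto

lemma T0_nz:
  fixes p q t u :: complex assumes p: "norm p < 1" "p \<noteq> 0" and nz: "q \<noteq> 0" "t \<noteq> 0" and u: "u \<notin> T0 p q t"
  shows "theta p (q * u) \<noteq> 0" "theta p (u / t) \<noteq> 0" "theta p (q * u / t) \<noteq> 0"
    "theta p (t * u / q) \<noteq> 0" "theta p (u / q) \<noteq> 0" "theta p (t * u) \<noteq> 0"
proof -
  show "theta p (q * u) \<noteq> 0" by (rule theta_nz_c[OF p nz(1)]) (use u in \<open>simp add: T0_def\<close>)
  have "theta p (inverse t * u) \<noteq> 0" by (rule theta_nz_c[OF p]) (use u nz in \<open>simp_all add: T0_def\<close>)
  then show "theta p (u / t) \<noteq> 0" by (simp add: divide_inverse mult.commute)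
  have "theta p ((q / t) * u) \<noteq> 0" by (rule theta_nz_c[OF p]) (use u nz in \<open>simp_all add: T0_def\<close>)
  then show "theta p (q * u / t) \<noteq> 0" by (simp add: mult.commute mult.left_commute divide_inverse)
  have "theta p ((t / q) * u) \<noteq> 0" by (rule theta_nz_c[OF p]) (use u nz in \<open>simp_all add: T0_def\<close>)
  then show "theta p (t * u / q) \<noteq> 0" by (simp add: mult.commute mult.left_commute divide_inverse)
  have "theta p (inverse q * u) \<noteq> 0" by (rule theta_nz_c[OF p]) (use u nz in \<open>simp_all add: T0_def\<close>)
  then show "theta p (u / q) \<noteq> 0" by (simp add: divide_inverse mult.commute)
  show "theta p (t * u) \<noteq> 0" by (rule theta_nz_c[OF p nz(2)]) (use u in \<open>simp add: T0_def\<close>)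
qed

lemma opprod_eq_const:
  assumes A: "\<And>i j e e'. i < length xs \<Longrightarrow> j < length xs \<Longrightarrow> i \<noteq> j \<Longrightarrow>
              inverse (w (xs ! i) (xs ! j)) * f e e' (xs ! j / xs ! i) = h (xs ! i) (xs ! j)"
  shows "opprod f w xs M =
     (\<Sum>es\<in>{es. length es = length xs \<and> mset (zip es xs) = M}. (- 1) ^ length (filter id es)) *
     (\<Prod>i<length xs. \<Prod>j\<in>{i<..<length xs}. h (xs ! i) (xs ! j))"
  unfolding opprod_def sum_distrib_right
proof (rule sum.cong[OF refl])
  fix es assume "es \<in> {es. length es = length xs \<and> mset (zip es xs) = M}"
  have "(\<Prod>i<length xs. \<Prod>j\<in>{i<..<length xs}. inverse (w (xs ! i) (xs ! j)) * f (es ! i) (es ! j) (xs ! j / xs ! i))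
      = (\<Prod>i<length xs. \<Prod>j\<in>{i<..<length xs}. h (xs ! i) (xs ! j))"
    by (intro prod.cong refl A) auto
  then show "(- 1) ^ length (filter id es) *
        (\<Prod>i<length xs. \<Prod>j\<in>{i<..<length xs}. inverse (w (xs ! i) (xs ! j)) * f (es ! i) (es ! j) (xs ! j / xs ! i)) =
        (- 1) ^ length (filter id es) * (\<Prod>i<length xs. \<Prod>j\<in>{i<..<length xs}. h (xs ! i) (xs ! j))"
    by simp
qed

lemma length_filter_mset: "length (filter P l) = size (filter_mset P (mset l))"
  by (metis mset_filter size_mset)

lemma sumA_perm:
  fixes xs :: "complex list" and M :: "(bool \<times> complex) multiset"
  assumes s: "s permutes {..<length xs}" and ys: "ys = permute_list s xs"
  shows "(\<Sum>es\<in>{es. length es = length ys \<and> mset (zip es ys) = M}. ((- 1) ^ length (filter id es) :: complex)) =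
         (\<Sum>es\<in>{es. length es = length xs \<and> mset (zip es xs) = M}. (- 1) ^ length (filter id es))"
proof -
  have si: "inv s permutes {..<length xs}" using permutes_inv[OF s] .
  have lys: "length ys = length xs" using ys by simp
  have xs: "xs = permute_list (inv s) ys"
  proof -
    have "permute_list (inv s) (permute_list s xs) = permute_list (s \<circ> inv s) xs"
      using permute_list_compose[OF si, of s] by simp
    then show ?thesis unfolding ys using permutes_inv_o(1)[OF s] by simp
  qed
  show ?thesis
  proof (rule sum.reindex_bij_witness[where j = "permute_list (inv s)" and i = "permute_list s"])
    fix a assume a: "a \<in> {es. length es = length ys \<and> mset (zip es ys) = M}"
    then have la: "length a = length xs" using lys by simp
    show "permute_list s (permute_list (inv s) a) = a"
      using permute_list_compose[of s a "inv s"] s la permutes_inv_o(2)[OF s] by simp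
    have "zip (permute_list (inv s) a) xs = permute_list (inv s) (zip a ys)"
      unfolding xs using permute_list_zip[OF si, of a ys] la lys by simp
    then have "mset (zip (permute_list (inv s) a) xs) = mset (zip a ys)"
      using mset_permute_list[of "inv s" "zip a ys"] si la lys by simp
    then show "permute_list (inv s) a \<in> {es. length es = length xs \<and> mset (zip es xs) = M}"
      using a la by simp
    show "(- 1) ^ length (filter id (permute_list (inv s) a)) = ((- 1) ^ length (filter id a) :: complex)"
      unfolding length_filter_mset using mset_permute_list[of "inv s" a] si la by simp
  next
    fix b assume b: "b \<in> {es. length es = length xs \<and> mset (zip es xs) = M}"
    then have lb: "length b = length xs" by simp
    show "permute_list (inv s) (permute_list s b) = b"
      using permute_list_compose[of "inv s" b s] si lb permutes_inv_o(1)[OF s] by simp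
    have "zip (permute_list s b) ys = permute_list s (zip b xs)"
      unfolding ys using permute_list_zip[OF s, of b xs] lb by simp
    then have "mset (zip (permute_list s b) ys) = mset (zip b xs)"
      using mset_permute_list[of s "zip b xs"] s lb by simp
    then show "permute_list s b \<in> {es. length es = length ys \<and> mset (zip es ys) = M}"
      using b lb lys by simp
  qed
qed

lemma prod_pairs_perm:
  fixes H :: "nat \<Rightarrow> nat \<Rightarrow> complex"
  assumes s: "s permutes {..<N}" and Hs: "\<And>a b. a < N \<Longrightarrow> b < N \<Longrightarrow> a \<noteq> b \<Longrightarrow> H a b = H b a"
  shows "(\<Prod>i<N. \<Prod>j\<in>{i<..<N}. H (s i) (s j)) = (\<Prod>i<N. \<Prod>j\<in>{i<..<N}. H i j)"
proof -
  define P where "P = (SIGMA i:{..<N}. {i<..<N})"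
  have img: "a < N \<Longrightarrow> s a < N" for a using permutes_in_image[OF s] by simp
  have imgi: "a < N \<Longrightarrow> inv s a < N" for a using permutes_in_image[OF permutes_inv[OF s]] by simp
  have inj: "s a = s b \<Longrightarrow> a = b" for a b using permutes_inj[OF s] by (simp add: inj_eq)
  have inji: "inv s a = inv s b \<Longrightarrow> a = b" for a b using permutes_inj[OF permutes_inv[OF s]] by (simp add: inj_eq)
  have l: "(\<Prod>i<N. \<Prod>j\<in>{i<..<N}. G i j) = (\<Prod>(i, j)\<in>P. G i j)" for G :: "nat \<Rightarrow> nat \<Rightarrow> complex"
    unfolding P_def by (rule prod.Sigma) auto
  have "(\<Prod>(i, j)\<in>P. H (s i) (s j)) = (\<Prod>(i, j)\<in>P. H i j)"
  proof (rule prod.reindex_bij_witness[where j = "\<lambda>(a, b). (min (s a) (s b), max (s a) (s b))"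
        and i = "\<lambda>(c, d). (min (inv s c) (inv s d), max (inv s c) (inv s d))"])
    fix x assume x: "x \<in> P"
    obtain a b where ab: "x = (a, b)" "a < b" "b < N" using x unfolding P_def by auto
    have d: "s a \<noteq> s b" using inj ab(2) by (metis less_irrefl)
    show "(case case x of (a, b) \<Rightarrow> (min (s a) (s b), max (s a) (s b)) of
          (c, d) \<Rightarrow> (min (inv s c) (inv s d), max (inv s c) (inv s d))) = x"
      using ab permutes_inverses(2)[OF s, of a] permutes_inverses(2)[OF s, of b]
      by (cases "s a < s b") (auto simp: min_def max_def)
    show "(case x of (a, b) \<Rightarrow> (min (s a) (s b), max (s a) (s b))) \<in> P"
      using ab d img[of a] img[of b] unfolding P_def by (auto simp: min_def max_def)
    show "(case case x of (a, b) \<Rightarrow> (min (s a) (s b), max (s a) (s b)) of (i, j) \<Rightarrow> H i j) =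
          (case x of (i, j) \<Rightarrow> H (s i) (s j))"
      using ab d img[of a] img[of b] Hs[of "s a" "s b"] by (auto simp: min_def max_def)
  next
    fix y assume y: "y \<in> P"
    obtain c d where cd: "y = (c, d)" "c < d" "d < N" using y unfolding P_def by auto
    have dd: "inv s c \<noteq> inv s d" using inji cd(2) by (metis less_irrefl)
    show "(case case y of (c, d) \<Rightarrow> (min (inv s c) (inv s d), max (inv s c) (inv s d)) of
          (a, b) \<Rightarrow> (min (s a) (s b), max (s a) (s b))) = y"
      using cd permutes_inverses(1)[OF s, of c] permutes_inverses(1)[OF s, of d]
      by (cases "inv s c < inv s d") (auto simp: min_def max_def)
    show "(case y of (c, d) \<Rightarrow> (min (inv s c) (inv s d), max (inv s c) (inv s d))) \<in> P"
      using cd dd imgi[of c] imgi[of d] unfolding P_def by (auto simp: min_def max_def)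
  qed
  then show ?thesis unfolding l .
qed

lemma opprod_sym_gen:
  fixes xs ys :: "complex list" and f :: "bool \<Rightarrow> bool \<Rightarrow> complex \<Rightarrow> complex"
  assumes m: "mset ys = mset xs"
    and G: "\<And>i j. i < length xs \<Longrightarrow> j < length xs \<Longrightarrow> i \<noteq> j \<Longrightarrow> Good (xs ! i) (xs ! j)"
    and A: "\<And>a b e e'. Good a b \<Longrightarrow> inverse (w a b) * f e e' (b / a) = h a b"
    and S: "\<And>a b. Good a b \<Longrightarrow> Good b a \<Longrightarrow> h a b = h b a"
  shows "opprod f w xs = opprod f w ys"
proof
  fix M
  obtain s where s: "s permutes {..<length xs}" and ys: "permute_list s xs = ys"
    using mset_eq_permutation[OF m] by metis
  have lys: "length ys = length xs" using ys by auto
  have ysn: "i < length xs \<Longrightarrow> ys ! i = xs ! s i" for i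
    using permute_list_nth[OF s] ys by auto
  have img: "a < length xs \<Longrightarrow> s a < length xs" for a using permutes_in_image[OF s] by simp
  have inj: "s a = s b \<Longrightarrow> a = b" for a b using permutes_inj[OF s] by (simp add: inj_eq)
  have Gy: "Good (ys ! i) (ys ! j)" if "i < length ys" "j < length ys" "i \<noteq> j" for i j
    using that ysn G[of "s i" "s j"] img inj lys by auto
  have ex: "opprod f w xs M =
     (\<Sum>es\<in>{es. length es = length xs \<and> mset (zip es xs) = M}. (- 1) ^ length (filter id es)) *
     (\<Prod>i<length xs. \<Prod>j\<in>{i<..<length xs}. h (xs ! i) (xs ! j))"
    by (rule opprod_eq_const) (use A G in auto)
  have ey: "opprod f w ys M =
     (\<Sum>es\<in>{es. length es = length ys \<and> mset (zip es ys) = M}. (- 1) ^ length (filter id es)) *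
     (\<Prod>i<length ys. \<Prod>j\<in>{i<..<length ys}. h (ys ! i) (ys ! j))"
    by (rule opprod_eq_const) (use A Gy in auto)
  have sums: "(\<Sum>es\<in>{es. length es = length ys \<and> mset (zip es ys) = M}. ((- 1) ^ length (filter id es) :: complex)) =
         (\<Sum>es\<in>{es. length es = length xs \<and> mset (zip es xs) = M}. (- 1) ^ length (filter id es))"
    by (rule sumA_perm[OF s ys[symmetric]])
  have "(\<Prod>i<length ys. \<Prod>j\<in>{i<..<length ys}. h (ys ! i) (ys ! j)) =
        (\<Prod>i<length xs. \<Prod>j\<in>{i<..<length xs}. h (xs ! s i) (xs ! s j))"
    unfolding lys by (intro prod.cong refl) (auto simp: ysn)
  also have "\<dots> = (\<Prod>i<length xs. \<Prod>j\<in>{i<..<length xs}. h (xs ! i) (xs ! j))"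
    by (rule prod_pairs_perm[OF s, where H = "\<lambda>a b. h (xs ! a) (xs ! b)"]) (use S G in auto)
  finally show "opprod f w xs M = opprod f w ys M" unfolding ex ey sums by simp
qed

lemma fEf_Th:
  fixes p q t y :: complex assumes p: "norm p < 1" "p \<noteq> 0" and nz: "q \<noteq> 0" "t \<noteq> 0" "y \<noteq> 0"
  shows "fEf p q t i y = ThE p q t y"
  using fEf_False[OF p nz] fEf_True[OF p nz] by (cases i) auto

lemma fFf_Th:
  fixes p q t y :: complex assumes p: "norm p < 1" "p \<noteq> 0" and nz: "q \<noteq> 0" "t \<noteq> 0" "y \<noteq> 0"
  shows "fFf p q t i y = ThF p q t y"
  using fFf_False[OF p nz] fFf_True[OF p nz] by (cases i) auto

theorem proposition3p11:
  fixes p q t :: complex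
  assumes "norm q < 1" and "norm p < 1"
    and "p \<noteq> 0" and "q \<noteq> 0" and "t \<noteq> 0"
    and "\<forall>k::nat. k > 0 \<longrightarrow> t ^ k \<noteq> 1"
  shows "\<exists>fE fF.
     (\<forall>i j. contraction_fun p q t (Edata p t i) (Edata p t j) (fE i j)) \<and>
     (\<forall>i j. contraction_fun p q t (Fdata p q t i) (Fdata p q t j) (fF i j)) \<and>
     (\<forall>i j. \<exists>T. discrete_Cstar T \<and>
        (\<forall>u. u \<noteq> 0 \<and> u \<notin> T \<longrightarrow> fE i j (inverse u) = gfun p q t u * fE j i u)) \<and>
     (\<forall>i j. \<exists>T. discrete_Cstar T \<and>
        (\<forall>u. u \<noteq> 0 \<and> u \<notin> T \<longrightarrow> fF i j (inverse u) = inverse (gfun p q t u) * fF j i u)) \<and>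
     (\<forall>N::nat. N \<ge> 1 \<longrightarrow> (\<exists>T. discrete_Cstar T \<and>
        (\<forall>xs ys. length xs = N \<and> (\<forall>x\<in>set xs. x \<noteq> 0) \<and>
           (\<forall>i<N. \<forall>j<N. i \<noteq> j \<longrightarrow> xs ! j / xs ! i \<notin> T) \<and> mset ys = mset xs \<longrightarrow>
           opprod fE (omega p q t) xs = opprod fE (omega p q t) ys \<and>
           opprod fF (omega' p q t) xs = opprod fF (omega' p q t) ys)))"
proof -
  note p = assms(2,3)
  note nz = assms(4,5)
  note tk = assms(6)
  define fE where "fE = (\<lambda>(i::bool) (j::bool). fEf p q t i)"
  define fF where "fF = (\<lambda>(i::bool) (j::bool). fFf p q t i)"
  have g0: "gam q t \<noteq> 0" using gam_sq[OF nz] nz by auto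
  have cE: "\<forall>i j. contraction_fun p q t (Edata p t i) (Edata p t j) (fE i j)"
  proof (intro allI)
    fix i j :: bool
    have "contraction_fun p q t (Edata p t i) (Edata p t j)
        (\<lambda>y. Phi p (inverse t) q ((if i then p else 1) * y) *
             Phi p (inverse t) q (((if i then inverse p else 1) * p * t / q) * inverse y))"
      by (rule CF[OF p]) (use p nz contrA_E[OF p(1) tk] contrB_E[OF p(1) tk p(2) nz] in auto)
    then show "contraction_fun p q t (Edata p t i) (Edata p t j) (fE i j)"
      unfolding fE_def fEf_def by simp
  qed
  have cF: "\<forall>i j. contraction_fun p q t (Fdata p q t i) (Fdata p q t j) (fF i j)"
  proof (intro allI)
    fix i j :: bool
    have "contraction_fun p q t (Fdata p q t i) (Fdata p q t j)
        (\<lambda>y. Phi p (inverse t) q ((if i then p else 1) * (gam q t * gam q t) * y) *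
             Phi p (inverse t) q (((if i then inverse p else 1) * p * (inverse (gam q t) * inverse (gam q t)) * t / q) * inverse y))"
      by (rule CF[OF p]) (use p nz g0 contrA_F[OF p(1) tk] contrB_F[OF p(1) tk p(2) nz] in auto)
    then show "contraction_fun p q t (Fdata p q t i) (Fdata p q t j) (fF i j)"
      unfolding fF_def fFf_def by simp
  qed
  have xE: "\<forall>i j. \<exists>T. discrete_Cstar T \<and>
        (\<forall>u. u \<noteq> 0 \<and> u \<notin> T \<longrightarrow> fE i j (inverse u) = gfun p q t u * fE j i u)"
  proof (intro allI, rule exI[of _ "T0 p q t"], rule conjI)
    fix i j :: bool
    show "discrete_Cstar (T0 p q t)" by (rule T0_discrete[OF p nz])
    show "\<forall>u. u \<noteq> 0 \<and> u \<notin> T0 p q t \<longrightarrow> fE i j (inverse u) = gfun p q t u * fE j i u"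
    proof (intro allI impI)
      fix u assume u: "u \<noteq> 0 \<and> u \<notin> T0 p q t"
      note th = T0_nz[OF p nz conjunct2[OF u]]
      have "fE i j (inverse u) = ThE p q t (inverse u)"
        unfolding fE_def using fEf_Th[OF p nz, of "inverse u"] u by simp
      also have "\<dots> = gfun p q t u * ThE p q t u"
        by (rule ThE_inv[OF p nz conjunct1[OF u] th(1) th(2) th(3)])
      also have "ThE p q t u = fE j i u"
        unfolding fE_def using fEf_Th[OF p nz, of u] u by simp
      finally show "fE i j (inverse u) = gfun p q t u * fE j i u" .
    qed
  qed
  have xF: "\<forall>i j. \<exists>T. discrete_Cstar T \<and>
        (\<forall>u. u \<noteq> 0 \<and> u \<notin> T \<longrightarrow> fF i j (inverse u) = inverse (gfun p q t u) * fF j i u)"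
  proof (intro allI, rule exI[of _ "T0 p q t"], rule conjI)
    fix i j :: bool
    show "discrete_Cstar (T0 p q t)" by (rule T0_discrete[OF p nz])
    show "\<forall>u. u \<noteq> 0 \<and> u \<notin> T0 p q t \<longrightarrow> fF i j (inverse u) = inverse (gfun p q t u) * fF j i u"
    proof (intro allI impI)
      fix u assume u: "u \<noteq> 0 \<and> u \<notin> T0 p q t"
      note th = T0_nz[OF p nz conjunct2[OF u]]
      have "fF i j (inverse u) = ThF p q t (inverse u)"
        unfolding fF_def using fFf_Th[OF p nz, of "inverse u"] u by simp
      also have "\<dots> = inverse (gfun p q t u) * ThF p q t u"
        by (rule ThF_inv[OF p nz conjunct1[OF u] th(4) th(5) th(6)])
      also have "ThF p q t u = fF j i u"
        unfolding fF_def using fFf_Th[OF p nz, of u] u by simp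
      finally show "fF i j (inverse u) = inverse (gfun p q t u) * fF j i u" .
    qed
  qed
  define Good where "Good a b \<longleftrightarrow> a \<noteq> 0 \<and> b \<noteq> 0 \<and> b / a \<notin> T0 p q t \<and> a / b \<notin> T0 p q t" for a b :: complex
  have sym: "\<forall>N::nat. N \<ge> 1 \<longrightarrow> (\<exists>T. discrete_Cstar T \<and>
        (\<forall>xs ys. length xs = N \<and> (\<forall>x\<in>set xs. x \<noteq> 0) \<and>
           (\<forall>i<N. \<forall>j<N. i \<noteq> j \<longrightarrow> xs ! j / xs ! i \<notin> T) \<and> mset ys = mset xs \<longrightarrow>
           opprod fE (omega p q t) xs = opprod fE (omega p q t) ys \<and>
           opprod fF (omega' p q t) xs = opprod fF (omega' p q t) ys))"
  proof (intro allI impI, rule exI[of _ "T0 p q t"], rule conjI)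
    fix N :: nat
    show "discrete_Cstar (T0 p q t)" by (rule T0_discrete[OF p nz])
    show "\<forall>xs ys. length xs = N \<and> (\<forall>x\<in>set xs. x \<noteq> 0) \<and>
           (\<forall>i<N. \<forall>j<N. i \<noteq> j \<longrightarrow> xs ! j / xs ! i \<notin> T0 p q t) \<and> mset ys = mset xs \<longrightarrow>
           opprod fE (omega p q t) xs = opprod fE (omega p q t) ys \<and>
           opprod fF (omega' p q t) xs = opprod fF (omega' p q t) ys"
    proof (intro allI impI conjI)
    fix xs ys :: "complex list"
    assume h: "length xs = N \<and> (\<forall>x\<in>set xs. x \<noteq> 0) \<and>
           (\<forall>i<N. \<forall>j<N. i \<noteq> j \<longrightarrow> xs ! j / xs ! i \<notin> T0 p q t) \<and> mset ys = mset xs"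
    have G: "Good (xs ! i) (xs ! j)" if "i < length xs" "j < length xs" "i \<noteq> j" for i j
      using h that unfolding Good_def by (auto simp: nth_mem)
    have ratio: "b / a \<noteq> 0" "a / b = inverse (b / a)" if "Good a b" for a b
      using that unfolding Good_def by auto
    show "opprod fE (omega p q t) xs = opprod fE (omega p q t) ys"
    proof (rule opprod_sym_gen[where Good = Good and h = "\<lambda>a b. inverse (omega p q t a b) * ThE p q t (b / a)"])
      show "mset ys = mset xs" using h by simp
      show "\<And>i j. i < length xs \<Longrightarrow> j < length xs \<Longrightarrow> i \<noteq> j \<Longrightarrow> Good (xs ! i) (xs ! j)" by (rule G)
      fix a b e e' assume ab: "Good a b"
      show "inverse (omega p q t a b) * fE e e' (b / a) = inverse (omega p q t a b) * ThE p q t (b / a)"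
        unfolding fE_def using fEf_Th[OF p nz ratio(1)[OF ab]] by simp
    next
      fix a b assume ab: "Good a b" and ba: "Good b a"
      have a0: "a \<noteq> 0" "b \<noteq> 0" using ab unfolding Good_def by auto
      have "inverse (omega p q t a b) * ThE p q t (b / a) = KK p q t (b / a)"
        by (rule omE[OF a0(1) nz]) (rule T0_nz(3)[OF p nz], use ab in \<open>simp add: Good_def\<close>)
      also have "\<dots> = KK p q t (inverse (b / a))" by (rule KK_inv[symmetric, OF p nz ratio(1)[OF ab]])
      also have "inverse (b / a) = a / b" using ratio(2)[OF ab] by simp
      also have "KK p q t (a / b) = inverse (omega p q t b a) * ThE p q t (a / b)"
        by (rule omE[OF a0(2) nz, symmetric]) (rule T0_nz(3)[OF p nz], use ab in \<open>simp add: Good_def\<close>)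
      finally show "inverse (omega p q t a b) * ThE p q t (b / a) = inverse (omega p q t b a) * ThE p q t (a / b)" .
    qed
    show "opprod fF (omega' p q t) xs = opprod fF (omega' p q t) ys"
    proof (rule opprod_sym_gen[where Good = Good and h = "\<lambda>a b. inverse (omega' p q t a b) * ThF p q t (b / a)"])
      show "mset ys = mset xs" using h by simp
      show "\<And>i j. i < length xs \<Longrightarrow> j < length xs \<Longrightarrow> i \<noteq> j \<Longrightarrow> Good (xs ! i) (xs ! j)" by (rule G)
      fix a b e e' assume ab: "Good a b"
      show "inverse (omega' p q t a b) * fF e e' (b / a) = inverse (omega' p q t a b) * ThF p q t (b / a)"
        unfolding fF_def using fFf_Th[OF p nz ratio(1)[OF ab]] by simp
    next
      fix a b assume ab: "Good a b" and ba: "Good b a"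
      have a0: "a \<noteq> 0" "b \<noteq> 0" using ab unfolding Good_def by auto
      have "inverse (omega' p q t a b) * ThF p q t (b / a) = KK p q t (b / a)"
        by (rule omF[OF a0(1) nz]) (rule T0_nz(4)[OF p nz], use ab in \<open>simp add: Good_def\<close>)
      also have "\<dots> = KK p q t (inverse (b / a))" by (rule KK_inv[symmetric, OF p nz ratio(1)[OF ab]])
      also have "inverse (b / a) = a / b" using ratio(2)[OF ab] by simp
      also have "KK p q t (a / b) = inverse (omega' p q t b a) * ThF p q t (a / b)"
        by (rule omF[OF a0(2) nz, symmetric]) (rule T0_nz(4)[OF p nz], use ab in \<open>simp add: Good_def\<close>)
      finally show "inverse (omega' p q t a b) * ThF p q t (b / a) = inverse (omega' p q t b a) * ThF p q t (a / b)" .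
    qed
    qed
  qed
  show ?thesis
    by (rule exI[of _ fE], rule exI[of _ fF]) (intro conjI cE cF xE xF sym)
qed

end
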